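(* Let $k$, $\underline{F_\rho}$ and $\rho_0$ be as in the context. For every $\rho\in(0,\rho_0)$ there exist $\lambda_\rho^+>0$, $\lambda_\rho^-<0$ and $u_\rho^+,u_\rho^-\in C[0,1]$ with $\|u_\rho^\pm\|_\infty=\rho$ such that $(\lambda,u)=(\lambda_\rho^\pm,u_\rho^\pm)$ solves \[ u(t)=\lambda\int_0^1 k(t,s)\,\frac{\sin\!\big(\tfrac32\pi s\big)e^{u(s)}}{\int_0^1 e^{u(x)}\,dx}\,ds,\qquad t\in[0,1], \] equivalently the Neumann problem $-u''(t)+u(t)=\lambda\,\sin(\tfrac32\pi t)e^{u(t)}/\int_0^1e^{u(x)}dx$ on $(0,1)$, $u'(0)=u'(1)=0$. Moreover, every pair $(\lambda,u)\in\mathbb{R}\times C[0,1]$ with $\|u\|_\infty=\rho$ solving this integral equation satisfies $|\lambda|\le \rho\big/\max_{[0,1]}\underline{F_\rho}$.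
   Context: $k(t,s)=\frac{1}{\sinh 1}\cosh(1-s)\cosh(t)$ for $0\le t\le s\le1$ and $k(t,s)=\frac{1}{\sinh 1}\cosh(1-t)\cosh(s)$ for $0\le s\le t\le 1$. For $\rho>0$, $\underline{F_\rho}(t)=e^{-2\rho}\int_0^{2/3}k(t,s)\sin(\frac32\pi s)\,ds+e^{2\rho}\int_{2/3}^1k(t,s)\sin(\frac32\pi s)\,ds$. With $b=3\pi/2$, $q=1/[(1+b^2)\sinh 1]$, $\mathcal{A}(t)=q\sin(bt)\sinh 1+qb(\cosh(1-t)+\cosh(\frac13)\cosh t)$, $\mathcal{B}(t)=-qb\cosh(\frac13)\cosh t$, $\mathcal{C}(t)=qb(\cosh(\frac23)+1)\cosh(1-t)$, $\mathcal{D}(t)=q(\sinh(1)\sin(bt)-b\cosh(\frac23)\cosh(1-t))$, define $\rho_1=\frac14\log\max_{[0,2/3]}(-\mathcal{A}/\mathcal{B})$, $\rho_2=\frac14\log\max_{[2/3,1]}(-\mathcal{C}/\mathcal{D})$, $\rho_0=\max\{\rho_1,\rho_2\}$. *)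

theory Defs
  imports "HOL-Analysis.Analysis"
begin

text \<open>Green's function of the Neumann problem -u''+u = f, u'(0)=u'(1)=0.\<close>
definition kern :: "real \<Rightarrow> real \<Rightarrow> real" where
  "kern t s = (if t \<le> s then cosh (1 - s) * cosh t / sinh 1
               else cosh (1 - t) * cosh s / sinh 1)"

definition bb :: real where "bb = 3 * pi / 2"

definition qq :: real where "qq = 1 / ((1 + bb^2) * sinh 1)"

definition FF :: "real \<Rightarrow> real \<Rightarrow> real" where
  "FF \<rho> t = exp (-2*\<rho>) * integral {0..2/3} (\<lambda>s. kern t s * sin (3/2 * pi * s))
          + exp (2*\<rho>) * integral {2/3..1} (\<lambda>s. kern t s * sin (3/2 * pi * s))"

definition AA :: "real \<Rightarrow> real" where
  "AA t = qq * sin (bb*t) * sinh 1 + qq * bb * (cosh (1 - t) + cosh (1/3) * cosh t)"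
definition BB :: "real \<Rightarrow> real" where
  "BB t = - qq * bb * cosh (1/3) * cosh t"
definition CC :: "real \<Rightarrow> real" where
  "CC t = qq * bb * (cosh (2/3) + 1) * cosh (1 - t)"
definition DD :: "real \<Rightarrow> real" where
  "DD t = qq * (sinh 1 * sin (bb*t) - bb * cosh (2/3) * cosh (1 - t))"

definition rho1 :: real where
  "rho1 = ln (SUP t\<in>{0..2/3}. - AA t / BB t) / 4"
definition rho2 :: real where
  "rho2 = ln (SUP t\<in>{2/3..1}. - CC t / DD t) / 4"
definition rho0 :: real where
  "rho0 = max rho1 rho2"

definition supnorm :: "(real \<Rightarrow> real) \<Rightarrow> real" where
  "supnorm u = (SUP t\<in>{0..1}. \<bar>u t\<bar>)"

definition solves :: "real \<Rightarrow> (real \<Rightarrow> real) \<Rightarrow> bool" where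
  "solves lam u \<longleftrightarrow> (\<forall>t\<in>{0..1}. u t = lam * integral {0..1}
      (\<lambda>s. kern t s * (sin (3/2 * pi * s) * exp (u s) / integral {0..1} (\<lambda>x. exp (u x)))))"

end

theory Submission
  imports Defs "HOL-Homology.Homology"
begin

lemma brouwer_nball:
  fixes n :: nat and f :: "(nat \<Rightarrow> real) \<Rightarrow> (nat \<Rightarrow> real)"
  assumes B: "B = {x::nat\<Rightarrow>real. (\<Sum>i\<le>n. (x i)^2) \<le> 1 \<and> (\<forall>i>n. x i = 0)}"
  assumes contf: "continuous_on B f" and fB: "f ` B \<subseteq> B"
  shows "\<exists>x\<in>B. f x = x"
proof (rule ccontr)
  assume "\<not> (\<exists>x\<in>B. f x = x)"
  then have nf: "\<And>x. x \<in> B \<Longrightarrow> f x \<noteq> x" by blast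
  define S where "S = {x::nat\<Rightarrow>real. (\<Sum>i\<le>n. (x i)^2) = 1 \<and> (\<forall>i>n. x i = 0)}"
  have nsp: "nsphere n = top_of_set S"
    by (simp add: nsphere S_def euclidean_product_topology)
  define nr :: "(nat\<Rightarrow>real) \<Rightarrow> real" where "nr y = sqrt (\<Sum>i\<le>n. (y i)^2)" for y
  define phi :: "(nat\<Rightarrow>real) \<Rightarrow> (nat\<Rightarrow>real)" where "phi y = (\<lambda>i. if i \<le> n then y i / nr y else 0)" for y
  have nr0: "nr y = 0 \<longleftrightarrow> (\<forall>i\<le>n. y i = 0)" for y
    unfolding nr_def by (auto simp add: sum_nonneg_eq_0_iff)
  have phiS: "phi y \<in> S" if "nr y \<noteq> 0" for y
  proof -
    have pos: "(\<Sum>i\<le>n. (y i)^2) > 0" using that unfolding nr_def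
      by (metis less_eq_real_def real_sqrt_zero sum_nonneg zero_le_power2)
    have "(\<Sum>i\<le>n. (phi y i)^2) = (\<Sum>i\<le>n. (y i)^2 / (nr y)^2)"
      by (simp add: phi_def power_divide)
    also have "\<dots> = (\<Sum>i\<le>n. (y i)^2) / (nr y)^2" by (simp add: sum_divide_distrib)
    also have "\<dots> = 1" using pos unfolding nr_def by simp
    finally show ?thesis unfolding S_def phi_def by auto
  qed
  have SB: "S \<subseteq> B" unfolding S_def B by auto
  have nrS: "x \<in> S \<Longrightarrow> nr x = 1" for x unfolding S_def nr_def by simp
  have phiid: "x \<in> S \<Longrightarrow> phi x = x" for x
    using nrS[of x] unfolding phi_def S_def by (auto simp: fun_eq_iff)
  define h1 where "h1 p = phi (\<lambda>i. snd p i - fst p * f (snd p) i)" for p :: "real \<times> (nat \<Rightarrow> real)"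
  define h2 where "h2 p = phi (\<lambda>i. (1 - fst p) * snd p i - f (\<lambda>j. (1 - fst p) * snd p j) i)" for p :: "real \<times> (nat \<Rightarrow> real)"
  have nz1: "nr (\<lambda>i. x i - t * f x i) \<noteq> 0" if "x \<in> S" "t \<in> {0..1}" for x t
  proof
    assume "nr (\<lambda>i. x i - t * f x i) = 0"
    then have eq: "\<And>i. i \<le> n \<Longrightarrow> x i = t * f x i" using nr0 by auto
    have fx: "f x \<in> B" using fB SB that by auto
    have "1 = (\<Sum>i\<le>n. (x i)^2)" using that unfolding S_def by simp
    also have "\<dots> = t^2 * (\<Sum>i\<le>n. (f x i)^2)"
      by (simp add: eq power_mult_distrib sum_distrib_left)
    also have "\<dots> \<le> t^2 * 1" using fx unfolding B by (intro mult_left_mono) auto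
    finally have "t^2 \<ge> 1" by simp
    then have t1: "t = 1" using that mult_left_le[of t t] by (auto simp: power2_eq_square)
    have "f x = x"
    proof
      fix i show "f x i = x i"
        using eq[of i] t1 fx that unfolding B S_def by (cases "i \<le> n") auto
    qed
    then show False using nf SB that by auto
  qed
  have sB: "(\<lambda>j. s * x j) \<in> B" if "x \<in> S" "s \<in> {0..1}" for x s
  proof -
    have "(\<Sum>i\<le>n. (s * x i)^2) = s^2 * (\<Sum>i\<le>n. (x i)^2)"
      by (simp add: power_mult_distrib sum_distrib_left)
    also have "\<dots> \<le> 1" using that unfolding S_def by (simp add: power_le_one)
    finally show ?thesis using that unfolding B S_def by auto
  qed
  have nz2: "nr (\<lambda>i. z i - f z i) \<noteq> 0" if "z \<in> B" for z
  proof
    assume "nr (\<lambda>i. z i - f z i) = 0"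
    then have eq: "\<And>i. i \<le> n \<Longrightarrow> z i = f z i" using nr0 by auto
    have fz: "f z \<in> B" using fB that by auto
    have "f z = z"
    proof
      fix i show "f z i = z i"
        using eq[of i] fz that unfolding B by (cases "i \<le> n") auto
    qed
    then show False using nf that by auto
  qed
  have contnr: "continuous_on A (\<lambda>p. nr (g p))" if "\<And>i. continuous_on A (\<lambda>p. g p i)" for A g
    unfolding nr_def by (intro continuous_intros that)
  have contphi: "continuous_on A (\<lambda>p. phi (g p))"
    if "\<And>i. continuous_on A (\<lambda>p. g p i)" "\<And>p. p \<in> A \<Longrightarrow> nr (g p) \<noteq> 0" for A g
    unfolding phi_def
    apply (rule continuous_on_coordinatewise_then_product)
    subgoal for i
      apply (cases "i \<le> n")
       apply simp
       apply (rule continuous_on_divide[OF that(1) contnr[OF that(1)]])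
       apply (simp add: that(2))
      apply simp
      done
    done
  have cf: "continuous_on A (\<lambda>p. f (g p) i)" if "continuous_on A g" "g ` A \<subseteq> B" for A g i
    by (rule continuous_on_product_then_coordinatewise)
       (rule continuous_on_compose2[OF contf that(1) that(2)])
  have csnd: "continuous_on A (\<lambda>p. snd p i)" for A :: "(real \<times> (nat \<Rightarrow> real)) set" and i
    by (rule continuous_on_product_then_coordinatewise[OF continuous_on_snd[OF continuous_on_id]])
  have H1: "homotopic_with_canon (\<lambda>x. True) S S id (h1 \<circ> Pair 1)"
    apply (subst homotopic_with)
     apply simp
  proof (intro exI conjI)
    show "continuous_map (prod_topology (top_of_set {0..1}) (top_of_set S)) (top_of_set S) h1"
    proof -
      have "continuous_on ({0..1} \<times> S) h1"
        unfolding h1_def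
      proof (rule contphi)
        fix i
        show "continuous_on ({0..1} \<times> S) (\<lambda>p. snd p i - fst p * f (snd p) i)"
          apply (rule continuous_on_diff[OF csnd])
          apply (rule continuous_on_mult[OF continuous_on_fst[OF continuous_on_id]])
          apply (rule cf[OF continuous_on_snd[OF continuous_on_id]])
          using SB by auto
      qed (auto simp: nz1)
      moreover have "h1 ` ({0..1} \<times> S) \<subseteq> S"
        unfolding h1_def using phiS nz1 by auto
      ultimately show ?thesis by (simp add: prod_topology_subtopology subtopology_subtopology Times_Int_Times continuous_map_subtopology_eu image_subset_iff_funcset)
    qed
  qed (auto simp: h1_def phiid)
  have H2: "homotopic_with_canon (\<lambda>x. True) S S (h1 \<circ> Pair 1) (h2 \<circ> Pair 1)"
    apply (subst homotopic_with)
     apply simp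
  proof (intro exI conjI)
    show "continuous_map (prod_topology (top_of_set {0..1}) (top_of_set S)) (top_of_set S) h2"
    proof -
      have "continuous_on ({0..1} \<times> S) h2"
        unfolding h2_def
      proof (rule contphi)
        fix i
        have cg: "continuous_on ({0..1} \<times> S) (\<lambda>p. (\<lambda>j. (1 - fst p) * snd p j))"
          apply (rule continuous_on_coordinatewise_then_product)
          apply (rule continuous_on_mult[OF continuous_on_diff[OF continuous_on_const continuous_on_fst[OF continuous_on_id]] csnd])
          done
        show "continuous_on ({0..1} \<times> S) (\<lambda>p. (1 - fst p) * snd p i - f (\<lambda>j. (1 - fst p) * snd p j) i)"
          apply (rule continuous_on_diff)
          apply (rule continuous_on_mult[OF continuous_on_diff[OF continuous_on_const continuous_on_fst[OF continuous_on_id]] csnd])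
          apply (rule cf[OF cg])
          using sB by auto
      qed (auto simp: nz2 sB)
      moreover have "h2 ` ({0..1} \<times> S) \<subseteq> S"
        unfolding h2_def using phiS nz2 sB by auto
      ultimately show ?thesis by (simp add: prod_topology_subtopology subtopology_subtopology Times_Int_Times continuous_map_subtopology_eu image_subset_iff_funcset)
    qed
  qed (auto simp: h1_def h2_def)
  have "contractible S"
    unfolding contractible_def
    using homotopic_with_trans[OF H1 H2] by (auto simp: h2_def o_def)
  then show False
    using non_contractible_space_nsphere[of n] nsp by simp
qed

lemma brouwer_ncube:
  fixes n :: nat and r :: real and f :: "(nat \<Rightarrow> real) \<Rightarrow> (nat \<Rightarrow> real)"
  assumes Q: "Q = {c::nat\<Rightarrow>real. (\<forall>j\<le>n. \<bar>c j\<bar> \<le> r) \<and> (\<forall>j>n. c j = 0)}"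
  assumes r: "r > 0" and contf: "continuous_on Q f" and fQ: "f ` Q \<subseteq> Q"
  shows "\<exists>c\<in>Q. f c = c"
proof -
  define B where "B = {x::nat\<Rightarrow>real. (\<Sum>i\<le>n. (x i)^2) \<le> 1 \<and> (\<forall>i>n. x i = 0)}"
  define K where "K = r * (real n + 1)"
  have K: "K > 0" using r unfolding K_def by simp
  define cl :: "(nat\<Rightarrow>real) \<Rightarrow> (nat\<Rightarrow>real)" where
    "cl y = (\<lambda>j. if j \<le> n then max (-r) (min r (y j)) else 0)" for y
  have clQ: "cl y \<in> Q" for y using r unfolding cl_def Q by auto
  have clid: "y \<in> Q \<Longrightarrow> cl y = y" for y unfolding cl_def Q by (auto simp: fun_eq_iff abs_le_iff)
  define g where "g x = (\<lambda>i. f (cl (\<lambda>j. K * x j)) i / K)" for x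
  have contcl: "continuous_on A (\<lambda>x. cl (h x))" if "continuous_on A h" for A h
    unfolding cl_def
    apply (rule continuous_on_coordinatewise_then_product)
    subgoal for j
      apply (cases "j \<le> n")
       apply simp
       apply (rule continuous_on_max[OF continuous_on_const continuous_on_min[OF continuous_on_const]])
       apply (rule continuous_on_product_then_coordinatewise[OF that])
      apply simp
      done
    done
  have contg: "continuous_on B g"
    unfolding g_def
    apply (rule continuous_on_coordinatewise_then_product)
    apply (rule continuous_on_divide[OF _ continuous_on_const])
     apply (rule continuous_on_product_then_coordinatewise)
     apply (rule continuous_on_compose2[OF contf contcl])
       apply (rule continuous_on_coordinatewise_then_product)
       apply (rule continuous_on_mult[OF continuous_on_const])
       apply (rule continuous_on_product_then_coordinatewise[OF continuous_on_id])
    using clQ K apply blast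
    using K apply simp
    done
  have gB: "g ` B \<subseteq> B"
  proof
    fix y assume "y \<in> g ` B"
    then obtain x where y: "y = g x" by auto
    define c where "c = f (cl (\<lambda>j. K * x j))"
    have cQ: "c \<in> Q" unfolding c_def using fQ clQ by auto
    have "(\<Sum>i\<le>n. (y i)^2) \<le> (\<Sum>i\<le>n. (r / K)^2)"
    proof (rule sum_mono)
      fix i assume "i \<in> {..n}"
      then have "\<bar>c i\<bar> \<le> r" using cQ unfolding Q by auto
      then have "\<bar>c i / K\<bar> \<le> r / K" using K by (simp add: divide_right_mono)
      then have "\<bar>c i / K\<bar>^2 \<le> (r/K)^2" by (intro power_mono) auto
      then have "(c i / K)^2 \<le> (r/K)^2" by (simp only: power2_abs)
      then show "(y i)^2 \<le> (r / K)^2" unfolding y g_def c_def by simp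
    qed
    also have "\<dots> = (real n + 1) * (r / K)^2" by simp
    also have "\<dots> = 1 / (real n + 1)" unfolding K_def using r by (simp add: power_divide power_mult_distrib) (simp add: power2_eq_square)
    also have "\<dots> \<le> 1" by simp
    finally have "(\<Sum>i\<le>n. (y i)^2) \<le> 1" .
    moreover have "\<forall>i>n. y i = 0" using cQ unfolding y g_def c_def Q by auto
    ultimately show "y \<in> B" unfolding B_def by auto
  qed
  obtain x where xB: "x \<in> B" and gx: "g x = x"
    using brouwer_nball[OF B_def contg gB] by auto
  define c where "c = (\<lambda>j. K * x j)"
  have "f (cl c) = c"
  proof
    fix i
    have "g x i = x i" using gx by simp
    then show "f (cl c) i = c i" unfolding g_def c_def using K by (simp add: field_simps)
  qed
  then have "c \<in> Q" using fQ clQ by (metis image_subset_iff)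
  then show ?thesis using \<open>f (cl c) = c\<close> clid by auto
qed


lemma sinh1_pos: "sinh (1::real) > 0"
  using sinh_real_less_iff[of 0 1] by simp

lemma kern_alt: "kern t s = (if s \<le> t then cosh (1 - t) * cosh s else cosh t * cosh (1 - s)) / sinh 1"
  unfolding kern_def by (auto simp: mult.commute)

lemma kern_pos: "kern t s > 0"
  unfolding kern_def using sinh1_pos by auto

lemma cosh_le1: "x \<in> {0..1} \<Longrightarrow> cosh x \<le> cosh (1::real)"
  by (subst cosh_real_nonneg_le_iff) auto

lemma kern_le: "t \<in> {0..1} \<Longrightarrow> s \<in> {0..1} \<Longrightarrow> kern t s \<le> cosh 1 * cosh 1 / sinh 1"
  unfolding kern_def using sinh1_pos
  by (auto intro!: divide_right_mono mult_mono cosh_le1)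

lemma kern_cont: "continuous_on S (kern t)"
proof -
  have "continuous_on S (\<lambda>s. (if s \<le> t then cosh (1 - t) * cosh s else cosh t * cosh (1 - s)) / sinh 1)"
    by (intro continuous_on_divide continuous_on_cases_1 continuous_intros) auto
  then show ?thesis by (simp add: kern_alt[abs_def])
qed

lemma cosh_lip: "a \<in> {0..1} \<Longrightarrow> b \<in> {0..1} \<Longrightarrow> \<bar>cosh a - cosh b\<bar> \<le> sinh 1 * \<bar>a - b\<bar>"
  for a b :: real
proof -
  assume a: "a \<in> {0..1}" and b: "b \<in> {0..1}"
  have "norm (cosh a - cosh b) \<le> sinh 1 * norm (a - b)"
  proof (rule field_differentiable_bound[of "{0..1::real}" cosh sinh])
    show "\<And>z. z \<in> {0..1::real} \<Longrightarrow> (cosh has_field_derivative sinh z) (at z within {0..1})"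
      by (auto intro!: derivative_eq_intros)
    show "\<And>z. z \<in> {0..1::real} \<Longrightarrow> norm (sinh z) \<le> sinh 1"
    proof -
      fix z :: real assume "z \<in> {0..1}"
      then have "0 \<le> sinh z" "sinh z \<le> sinh 1" using sinh_real_le_iff[of 0 z] by auto
      then show "norm (sinh z) \<le> sinh 1" by simp
    qed
  qed (use a b in auto)
  then show ?thesis by simp
qed

lemma cosh_kern_help: "a \<in> {0..1} \<Longrightarrow> b \<in> {0..1} \<Longrightarrow> c \<in> {0..1} \<Longrightarrow>
    \<bar>cosh a * cosh c / sinh 1 - cosh b * cosh c / sinh 1\<bar> \<le> cosh 1 * \<bar>a - b\<bar>" for a b c :: real
proof -
  assume that: "a \<in> {0..1}" "b \<in> {0..1}" "c \<in> {0..1}"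
  have "\<bar>cosh a * cosh c / sinh 1 - cosh b * cosh c / sinh 1\<bar> = \<bar>cosh a - cosh b\<bar> * cosh c / sinh 1"
    using sinh1_pos by (simp add: abs_mult left_diff_distrib[symmetric] diff_divide_distrib[symmetric])
  also have "\<dots> \<le> (sinh 1 * \<bar>a - b\<bar>) * cosh 1 / sinh 1"
    using sinh1_pos that by (intro divide_right_mono mult_mono cosh_lip cosh_le1) auto
  also have "\<dots> = cosh 1 * \<bar>a - b\<bar>" using sinh1_pos by simp
  finally show ?thesis .
qed

lemma kern_lip1: "t \<in> {0..1} \<Longrightarrow> t' \<in> {0..1} \<Longrightarrow> s \<in> {0..1} \<Longrightarrow> t \<le> t' \<Longrightarrow>
   \<bar>kern t s - kern t' s\<bar> \<le> cosh 1 * (t' - t)"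
proof -
  assume t: "t \<in> {0..1}" and t': "t' \<in> {0..1}" and s: "s \<in> {0..1}" and tt: "t \<le> t'"
  consider "t' \<le> s" | "s < t" | "t \<le> s" "s < t'" by linarith
  then show ?thesis
  proof cases
    case 1
    then have "kern t s = cosh t * cosh (1 - s) / sinh 1" "kern t' s = cosh t' * cosh (1 - s) / sinh 1"
      using tt unfolding kern_def by (auto simp: mult.commute)
    then show ?thesis using cosh_kern_help[of t t' "1 - s"] t t' s tt by auto
  next
    case 2
    then have "kern t s = cosh (1 - t) * cosh s / sinh 1" "kern t' s = cosh (1 - t') * cosh s / sinh 1"
      using tt unfolding kern_def by auto
    then show ?thesis using cosh_kern_help[of "1 - t" "1 - t'" s] t t' s tt by auto
  next
    case 3
    then have k1: "kern t s = cosh t * cosh (1 - s) / sinh 1" "kern t' s = cosh (1 - t') * cosh s / sinh 1"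
      unfolding kern_def by (auto simp: mult.commute)
    have m: "cosh s * cosh (1 - s) / sinh 1 = cosh (1 - s) * cosh s / sinh 1" by (simp add: mult.commute)
    have "\<bar>kern t s - kern t' s\<bar> \<le> \<bar>cosh t * cosh (1 - s) / sinh 1 - cosh s * cosh (1 - s) / sinh 1\<bar>
          + \<bar>cosh (1 - s) * cosh s / sinh 1 - cosh (1 - t') * cosh s / sinh 1\<bar>"
      unfolding k1 m[symmetric]
      using abs_triangle_ineq[of "cosh t * cosh (1 - s) / sinh 1 - cosh s * cosh (1 - s) / sinh 1"
         "cosh s * cosh (1 - s) / sinh 1 - cosh (1 - t') * cosh s / sinh 1"] by simp
    also have "\<dots> \<le> cosh 1 * \<bar>t - s\<bar> + cosh 1 * \<bar>(1 - s) - (1 - t')\<bar>"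
      using t t' s 3 by (intro add_mono cosh_kern_help) auto
    also have "\<dots> = cosh 1 * (t' - t)" using 3 by (simp add: algebra_simps)
    finally show ?thesis .
  qed
qed

lemma kern_lip: "t \<in> {0..1} \<Longrightarrow> t' \<in> {0..1} \<Longrightarrow> s \<in> {0..1} \<Longrightarrow>
   \<bar>kern t s - kern t' s\<bar> \<le> cosh 1 * \<bar>t - t'\<bar>"
  using kern_lip1[of t t' s] kern_lip1[of t' t s] by (cases "t \<le> t'") (auto simp: abs_minus_commute)

lemma exp_lip: "\<bar>a\<bar> \<le> r \<Longrightarrow> \<bar>b\<bar> \<le> r \<Longrightarrow> \<bar>exp a - exp b\<bar> \<le> exp r * \<bar>a - b\<bar>" for a b r :: real
proof -
  assume a: "\<bar>a\<bar> \<le> r" and b: "\<bar>b\<bar> \<le> r"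
  have "norm (exp a - exp b) \<le> exp r * norm (a - b)"
  proof (rule field_differentiable_bound[of "{-r..r}" exp exp])
    show "\<And>z. z \<in> {-r..r} \<Longrightarrow> (exp has_field_derivative exp z) (at z within {-r..r})"
      by (rule DERIV_subset[OF DERIV_exp]) auto
    show "\<And>z. z \<in> {-r..r} \<Longrightarrow> norm (exp z) \<le> exp r" by auto
  qed (use a b in auto)
  then show ?thesis by simp
qed

definition Eint :: "(real \<Rightarrow> real) \<Rightarrow> real" where
  "Eint u = integral {0..1} (\<lambda>x. exp (u x))"

definition Gf :: "(real \<Rightarrow> real) \<Rightarrow> real \<Rightarrow> real" where
  "Gf u t = integral {0..1} (\<lambda>s. kern t s * (sin (3/2 * pi * s) * exp (u s) / Eint u))"

definition Dom :: "real \<Rightarrow> (real \<Rightarrow> real) set" where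
  "Dom r = {u. continuous_on {0..1} u \<and> (\<forall>s\<in>{0..1}. \<bar>u s\<bar> \<le> r)}"

lemma solves_Gf: "solves lam u \<longleftrightarrow> (\<forall>t\<in>{0..1}. u t = lam * Gf u t)"
  by (simp add: solves_def Gf_def Eint_def)

lemma int_diff_le:
  fixes f g :: "real \<Rightarrow> real"
  assumes "f integrable_on {0..1}" "g integrable_on {0..1}" "\<And>s. s \<in> {0..1} \<Longrightarrow> \<bar>f s - g s\<bar> \<le> B"
  shows "\<bar>integral {0..1} f - integral {0..1} g\<bar> \<le> B"
proof -
  have "norm (integral {0..1} (\<lambda>s. f s - g s)) \<le> integral {0..1} (\<lambda>s::real. B)"
    by (rule integral_norm_bound_integral) (use assms in \<open>auto intro: integrable_diff\<close>)
  then show ?thesis using integral_diff[OF assms(1,2)] by (simp add: fun_diff_def)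
qed

lemma int_le_const:
  fixes f :: "real \<Rightarrow> real"
  assumes "f integrable_on {0..1}" "\<And>s. s \<in> {0..1} \<Longrightarrow> \<bar>f s\<bar> \<le> B"
  shows "\<bar>integral {0..1} f\<bar> \<le> B"
  using int_diff_le[OF assms(1) integrable_0, of B] assms(2) by simp

lemma Dom_cont: "u \<in> Dom r \<Longrightarrow> continuous_on {0..1} u" by (simp add: Dom_def)
lemma Dom_bd: "u \<in> Dom r \<Longrightarrow> s \<in> {0..1} \<Longrightarrow> \<bar>u s\<bar> \<le> r" by (simp add: Dom_def)

lemma exp_integrable: "u \<in> Dom r \<Longrightarrow> (\<lambda>x. exp (u x)) integrable_on {0..1}"
  by (intro integrable_continuous_interval continuous_intros Dom_cont)

lemma Eint_bounds:
  assumes u: "u \<in> Dom r"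
  shows "exp (-r) \<le> Eint u" "Eint u \<le> exp r"
proof -
  have ub: "\<And>s. s \<in> {0..1} \<Longrightarrow> -r \<le> u s \<and> u s \<le> r" using Dom_bd[OF u] by (simp add: abs_le_iff) (smt (verit))
  have "integral {0..1} (\<lambda>x::real. exp (-r)) \<le> integral {0..1} (\<lambda>x. exp (u x))"
    using ub by (intro integral_le exp_integrable[OF u] integrable_const_ivl) auto
  then show "exp (-r) \<le> Eint u" by (simp add: Eint_def)
  have "integral {0..1} (\<lambda>x. exp (u x)) \<le> integral {0..1} (\<lambda>x::real. exp r)"
    using ub by (intro integral_le exp_integrable[OF u] integrable_const_ivl) auto
  then show "Eint u \<le> exp r" by (simp add: Eint_def)
qed

lemma Eint_pos: "u \<in> Dom r \<Longrightarrow> Eint u > 0"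
  using Eint_bounds(1)[of u r] exp_gt_zero[of "-r"] by linarith

lemma w_bounds:
  assumes u: "u \<in> Dom r" and s: "s \<in> {0..1}"
  shows "exp (-2*r) \<le> exp (u s) / Eint u" "exp (u s) / Eint u \<le> exp (2*r)"
proof -
  have E: "exp (-r) \<le> Eint u" "Eint u \<le> exp r" "Eint u > 0" using Eint_bounds[OF u] Eint_pos[OF u] by auto
  have us: "-r \<le> u s" "u s \<le> r" using Dom_bd[OF u s] by auto
  have "exp (-2*r) = exp (-r - r)" by simp
  also have "\<dots> = exp (-r) / exp r" by (rule exp_diff)
  also have "\<dots> \<le> exp (u s) / exp r" using us by (intro divide_right_mono) auto
  also have "\<dots> \<le> exp (u s) / Eint u" using E by (intro divide_left_mono) auto
  finally show "exp (-2*r) \<le> exp (u s) / Eint u" by simp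
  have "exp (u s) / Eint u \<le> exp r / Eint u" using us E by (intro divide_right_mono) auto
  also have "\<dots> \<le> exp r / exp (-r)" using E by (intro divide_left_mono) auto
  also have "\<dots> = exp (r - (-r))" by (rule exp_diff[symmetric])
  also have "\<dots> = exp (2*r)" by simp
  finally show "exp (u s) / Eint u \<le> exp (2*r)" .
qed

lemma Gf_integrable: "u \<in> Dom r \<Longrightarrow> (\<lambda>s. kern t s * (sin (3/2 * pi * s) * exp (u s) / Eint u)) integrable_on {0..1}"
  using Eint_pos[of u r] by (intro integrable_continuous_interval continuous_intros kern_cont Dom_cont) auto

lemma Gf_bound:
  assumes u: "u \<in> Dom r" and t: "t \<in> {0..1}"
  shows "\<bar>Gf u t\<bar> \<le> cosh 1 * cosh 1 / sinh 1 * exp (2*r)"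
  unfolding Gf_def
proof (rule int_le_const[OF Gf_integrable[OF u]])
  fix s :: real assume s: "s \<in> {0..1}"
  have "\<bar>kern t s * (sin (3/2 * pi * s) * exp (u s) / Eint u)\<bar> = kern t s * (\<bar>sin (3/2 * pi * s)\<bar> * (exp (u s) / Eint u))"
    using kern_pos[of t s] Eint_pos[OF u] by (simp add: abs_mult)
  also have "\<dots> \<le> (cosh 1 * cosh 1 / sinh 1) * (1 * exp (2*r))"
    using kern_le[OF t s] kern_pos[of t s] w_bounds[OF u s] Eint_pos[OF u]
    by (intro mult_mono) (auto simp: abs_sin_le_one)
  finally show "\<bar>kern t s * (sin (3/2 * pi * s) * exp (u s) / Eint u)\<bar> \<le> cosh 1 * cosh 1 / sinh 1 * exp (2*r)" by simp
qed

lemma Gf_lip_t: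
  assumes u: "u \<in> Dom r" and t: "t \<in> {0..1}" and t': "t' \<in> {0..1}"
  shows "\<bar>Gf u t - Gf u t'\<bar> \<le> cosh 1 * exp (2*r) * \<bar>t - t'\<bar>"
  unfolding Gf_def
proof (rule int_diff_le[OF Gf_integrable[OF u] Gf_integrable[OF u]])
  fix s :: real assume s: "s \<in> {0..1}"
  have "\<bar>kern t s * (sin (3/2 * pi * s) * exp (u s) / Eint u) - kern t' s * (sin (3/2 * pi * s) * exp (u s) / Eint u)\<bar>
      = \<bar>kern t s - kern t' s\<bar> * (\<bar>sin (3/2 * pi * s)\<bar> * (exp (u s) / Eint u))"
    using Eint_pos[OF u] by (simp add: abs_mult left_diff_distrib[symmetric] diff_divide_distrib[symmetric] mult.assoc)
  also have "\<dots> \<le> (cosh 1 * \<bar>t - t'\<bar>) * (1 * exp (2*r))"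
    using kern_lip[OF t t' s] w_bounds[OF u s] Eint_pos[OF u]
    by (intro mult_mono) (auto simp: abs_sin_le_one)
  finally show "\<bar>kern t s * (sin (3/2 * pi * s) * exp (u s) / Eint u) - kern t' s * (sin (3/2 * pi * s) * exp (u s) / Eint u)\<bar>
      \<le> cosh 1 * exp (2*r) * \<bar>t - t'\<bar>" by (simp add: mult_ac)
qed

lemma Eint_lip:
  assumes u: "u \<in> Dom r" and v: "v \<in> Dom r" and d: "\<And>s. s \<in> {0..1} \<Longrightarrow> \<bar>u s - v s\<bar> \<le> d"
  shows "\<bar>Eint u - Eint v\<bar> \<le> exp r * d"
  unfolding Eint_def
proof (rule int_diff_le[OF exp_integrable[OF u] exp_integrable[OF v]])
  fix s :: real assume s: "s \<in> {0..1}"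
  have "\<bar>exp (u s) - exp (v s)\<bar> \<le> exp r * \<bar>u s - v s\<bar>"
    by (rule exp_lip[OF Dom_bd[OF u s] Dom_bd[OF v s]])
  also have "\<dots> \<le> exp r * d" using d[OF s] by (intro mult_left_mono) auto
  finally show "\<bar>exp (u s) - exp (v s)\<bar> \<le> exp r * d" .
qed

lemma w_lip:
  assumes u: "u \<in> Dom r" and v: "v \<in> Dom r" and d: "\<And>s. s \<in> {0..1} \<Longrightarrow> \<bar>u s - v s\<bar> \<le> d"
    and s: "s \<in> {0..1}"
  shows "\<bar>exp (u s) / Eint u - exp (v s) / Eint v\<bar> \<le> 2 * exp (4*r) * d"
proof -
  have Eu: "exp (-r) \<le> Eint u" "Eint u \<le> exp r" "Eint u > 0" using Eint_bounds[OF u] Eint_pos[OF u] by auto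
  have Ev: "exp (-r) \<le> Eint v" "Eint v \<le> exp r" "Eint v > 0" using Eint_bounds[OF v] Eint_pos[OF v] by auto
  have d0: "d \<ge> 0" using d[OF s] by linarith
  have ee: "\<bar>exp (u s) - exp (v s)\<bar> \<le> exp r * d"
    using exp_lip[OF Dom_bd[OF u s] Dom_bd[OF v s]] d[OF s] by (smt (verit) exp_gt_zero mult_left_mono)
  have EE: "\<bar>Eint v - Eint u\<bar> \<le> exp r * d" using Eint_lip[OF u v d] by (simp add: abs_minus_commute)
  have evs: "exp (v s) \<le> exp r" using Dom_bd[OF v s] by auto
  have "exp (u s) / Eint u - exp (v s) / Eint v
      = ((exp (u s) - exp (v s)) * Eint v + exp (v s) * (Eint v - Eint u)) / (Eint u * Eint v)"
  proof -
    have "(exp (u s) - exp (v s)) * Eint v + exp (v s) * (Eint v - Eint u) = exp (u s) * Eint v - exp (v s) * Eint u"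
      by (simp add: algebra_simps)
    moreover have "exp (u s) / Eint u - exp (v s) / Eint v = (exp (u s) * Eint v - exp (v s) * Eint u) / (Eint u * Eint v)"
      using Eu Ev by (simp add: diff_frac_eq)
    ultimately show ?thesis by simp
  qed
  then have "\<bar>exp (u s) / Eint u - exp (v s) / Eint v\<bar>
      = \<bar>(exp (u s) - exp (v s)) * Eint v + exp (v s) * (Eint v - Eint u)\<bar> / (Eint u * Eint v)"
    using Eu Ev by (simp add: abs_mult)
  also have "\<dots> \<le> (exp r * d * exp r + exp r * (exp r * d)) / (exp (-r) * exp (-r))"
  proof (rule frac_le)
    have "\<bar>(exp (u s) - exp (v s)) * Eint v + exp (v s) * (Eint v - Eint u)\<bar>
        \<le> \<bar>exp (u s) - exp (v s)\<bar> * Eint v + exp (v s) * \<bar>Eint v - Eint u\<bar>"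
      using Ev abs_triangle_ineq[of "(exp (u s) - exp (v s)) * Eint v" "exp (v s) * (Eint v - Eint u)"]
      by (simp add: abs_mult)
    also have "\<dots> \<le> exp r * d * exp r + exp r * (exp r * d)"
      using ee EE Ev evs d0 by (intro add_mono mult_mono) auto
    finally show "\<bar>(exp (u s) - exp (v s)) * Eint v + exp (v s) * (Eint v - Eint u)\<bar>
        \<le> exp r * d * exp r + exp r * (exp r * d)" .
    show "0 \<le> exp r * d * exp r + exp r * (exp r * d)" using d0 by simp
    show "0 < exp (-r) * exp (-r)" by simp
    show "exp (-r) * exp (-r) \<le> Eint u * Eint v" using Eu Ev by (intro mult_mono) auto
  qed
  also have "\<dots> = 2 * exp (4*r) * d"
  proof -
    have X: "exp (-r) = 1 / exp r" by (simp add: exp_minus inverse_eq_divide)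
    have "4*r = r+r+r+r" by simp
    then have Y: "exp (4*r) = exp r * exp r * exp r * exp r" by (simp only: exp_add)
    show ?thesis unfolding X Y by (simp add: field_simps)
  qed
  finally show ?thesis .
qed

lemma Gf_lip_u:
  assumes u: "u \<in> Dom r" and v: "v \<in> Dom r" and d: "\<And>s. s \<in> {0..1} \<Longrightarrow> \<bar>u s - v s\<bar> \<le> d"
    and t: "t \<in> {0..1}"
  shows "\<bar>Gf u t - Gf v t\<bar> \<le> cosh 1 * cosh 1 / sinh 1 * (2 * exp (4*r)) * d"
  unfolding Gf_def
proof (rule int_diff_le[OF Gf_integrable[OF u] Gf_integrable[OF v]])
  fix s :: real assume s: "s \<in> {0..1}"
  have "\<bar>kern t s * (sin (3/2 * pi * s) * exp (u s) / Eint u) - kern t s * (sin (3/2 * pi * s) * exp (v s) / Eint v)\<bar>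
     = kern t s * (\<bar>sin (3/2 * pi * s)\<bar> * \<bar>exp (u s) / Eint u - exp (v s) / Eint v\<bar>)"
    using kern_pos[of t s] by (simp add: abs_mult right_diff_distrib[symmetric] times_divide_eq_right[symmetric] del: times_divide_eq_right)
  also have "\<dots> \<le> (cosh 1 * cosh 1 / sinh 1) * (1 * (2 * exp (4*r) * d))"
    using kern_le[OF t s] kern_pos[of t s] w_lip[OF u v d s]
    by (intro mult_mono) (auto simp: abs_sin_le_one)
  finally show "\<bar>kern t s * (sin (3/2 * pi * s) * exp (u s) / Eint u) - kern t s * (sin (3/2 * pi * s) * exp (v s) / Eint v)\<bar>
     \<le> cosh 1 * cosh 1 / sinh 1 * (2 * exp (4*r)) * d" by (simp add: mult_ac)
qed

lemma sin_nonneg_23: "s \<in> {0..2/3} \<Longrightarrow> sin (3/2 * pi * s) \<ge> 0"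
  by (intro sin_ge_zero) (auto simp: field_simps)

lemma sin_nonpos_23: "s \<in> {2/3..1} \<Longrightarrow> sin (3/2 * pi * s) \<le> 0"
proof -
  assume s: "s \<in> {2/3..1}"
  have "sin (3/2 * pi * s - pi) \<ge> 0"
    using s by (intro sin_ge_zero) (auto simp: field_simps)
  then show ?thesis by (simp add: sin_diff)
qed

lemma Gf_ge_FF:
  assumes u: "u \<in> Dom r" and t: "t \<in> {0..1}"
  shows "FF r t \<le> Gf u t"
proof -
  let ?g = "\<lambda>s. kern t s * (sin (3/2 * pi * s) * exp (u s) / Eint u)"
  let ?h = "\<lambda>s. kern t s * sin (3/2 * pi * s)"
  have ih: "?h integrable_on {0..1}" by (intro integrable_continuous_interval continuous_intros kern_cont)
  have ih1: "?h integrable_on {0..2/3}" by (rule integrable_on_subinterval[OF ih]) auto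
  have ih2: "?h integrable_on {2/3..1}" by (rule integrable_on_subinterval[OF ih]) auto
  have ig1: "?g integrable_on {0..2/3}" by (rule integrable_on_subinterval[OF Gf_integrable[OF u]]) auto
  have ig2: "?g integrable_on {2/3..1}" by (rule integrable_on_subinterval[OF Gf_integrable[OF u]]) auto
  have "Gf u t = integral {0..2/3} ?g + integral {2/3..1} ?g"
    unfolding Gf_def by (rule Henstock_Kurzweil_Integration.integral_combine[symmetric, OF _ _ Gf_integrable[OF u]]) auto
  moreover have "exp (-2*r) * integral {0..2/3} ?h \<le> integral {0..2/3} ?g"
  proof -
    have "exp (-2*r) * integral {0..2/3} ?h = integral {0..2/3} (\<lambda>s. exp (-2*r) * ?h s)" by simp
    also have "\<dots> \<le> integral {0..2/3} ?g"
    proof (rule integral_le)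
      show "(\<lambda>s. exp (-2*r) * ?h s) integrable_on {0..2/3}" using ih1 by (rule integrable_on_mult_right)
      show "?g integrable_on {0..2/3}" by (rule ig1)
      fix s :: real assume s: "s \<in> {0..2/3}"
      then have s1: "s \<in> {0..1}" by auto
      have "exp (-2*r) * (kern t s * sin (3/2 * pi * s)) = (kern t s * sin (3/2 * pi * s)) * exp (-2*r)" by simp
      also have "\<dots> \<le> (kern t s * sin (3/2 * pi * s)) * (exp (u s) / Eint u)"
        using w_bounds[OF u s1] kern_pos[of t s] sin_nonneg_23[OF s] by (intro mult_left_mono) auto
      finally show "exp (-2*r) * ?h s \<le> ?g s" by (simp add: mult_ac)
    qed
    finally show ?thesis .
  qed
  moreover have "exp (2*r) * integral {2/3..1} ?h \<le> integral {2/3..1} ?g"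
  proof -
    have "exp (2*r) * integral {2/3..1} ?h = integral {2/3..1} (\<lambda>s. exp (2*r) * ?h s)" by simp
    also have "\<dots> \<le> integral {2/3..1} ?g"
    proof (rule integral_le)
      show "(\<lambda>s. exp (2*r) * ?h s) integrable_on {2/3..1}" using ih2 by (rule integrable_on_mult_right)
      show "?g integrable_on {2/3..1}" by (rule ig2)
      fix s :: real assume s: "s \<in> {2/3..1}"
      then have s1: "s \<in> {0..1}" by auto
      have "exp (2*r) * (kern t s * sin (3/2 * pi * s)) = (kern t s * sin (3/2 * pi * s)) * exp (2*r)" by simp
      also have "\<dots> \<le> (kern t s * sin (3/2 * pi * s)) * (exp (u s) / Eint u)"
        using w_bounds[OF u s1] kern_pos[of t s] sin_nonpos_23[OF s]
        by (intro mult_left_mono_neg) (auto simp: mult_nonneg_nonpos)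
      finally show "exp (2*r) * ?h s \<le> ?g s" by (simp add: mult_ac)
    qed
    finally show ?thesis .
  qed
  ultimately show ?thesis unfolding FF_def by linarith
qed


definition hat :: "real \<Rightarrow> nat \<Rightarrow> real" where
  "hat x j = max 0 (1 - \<bar>x - real j\<bar>)"

lemma hat_nonneg: "hat x j \<ge> 0" by (simp add: hat_def)
lemma hat_le1: "hat x j \<le> 1" by (simp add: hat_def)

lemma hat_zero_below: "x \<ge> real n \<Longrightarrow> (\<Sum>j<n. hat x j) = 0"
  by (rule sum.neutral) (auto simp: hat_def)

lemma hat_sum: "x \<in> {0..real n} \<Longrightarrow> (\<Sum>j\<le>n. hat x j) = 1"
proof (induction n arbitrary: x)
  case 0
  then show ?case by (simp add: hat_def)
next
  case (Suc n)
  show ?case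
  proof (cases "x \<le> real n")
    case True
    then have "(\<Sum>j\<le>Suc n. hat x j) = (\<Sum>j\<le>n. hat x j) + hat x (Suc n)" by simp
    also have "(\<Sum>j\<le>n. hat x j) = 1" using Suc.IH[of x] Suc.prems True by auto
    also have "hat x (Suc n) = 0" using True by (simp add: hat_def)
    finally show ?thesis by simp
  next
    case False
    have "(\<Sum>j\<le>Suc n. hat x j) = (\<Sum>j<n. hat x j) + hat x n + hat x (Suc n)"
      by (simp add: lessThan_Suc_atMost[symmetric])
    also have "(\<Sum>j<n. hat x j) = 0" using False by (intro hat_zero_below) auto
    also have "hat x n = 1 - (x - real n)" using False Suc.prems by (simp add: hat_def)
    also have "hat x (Suc n) = x - real n" using False Suc.prems by (simp add: hat_def)
    finally show ?thesis by simp
  qed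
qed

lemma hat_supp: "hat x j \<noteq> 0 \<Longrightarrow> \<bar>x - real j\<bar> < 1"
  by (auto simp: hat_def)

lemma hat_cont: "continuous_on A (\<lambda>t. hat (a * t) j)"
  unfolding hat_def by (intro continuous_intros)

lemma coord_cont: "continuous_on A (\<lambda>c::nat\<Rightarrow>real. c i)"
  by (rule continuous_on_subset[OF continuous_on_product_coordinates]) auto

lemma approx_fix:
  fixes T :: "(real \<Rightarrow> real) \<Rightarrow> (real \<Rightarrow> real)" and r L C :: real and n :: nat
  assumes r: "r > 0" and L: "L \<ge> 0" and C: "C \<ge> 0" and n: "n \<ge> 1"
    and Ta: "\<And>u t. u \<in> Dom r \<Longrightarrow> t \<in> {0..1} \<Longrightarrow> \<bar>T u t\<bar> \<le> r"
    and Tb: "\<And>u t t'. u \<in> Dom r \<Longrightarrow> t \<in> {0..1} \<Longrightarrow> t' \<in> {0..1} \<Longrightarrow> \<bar>T u t - T u t'\<bar> \<le> L * \<bar>t - t'\<bar>"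
    and Tc: "\<And>u v d t. u \<in> Dom r \<Longrightarrow> v \<in> Dom r \<Longrightarrow> (\<And>s. s \<in> {0..1} \<Longrightarrow> \<bar>u s - v s\<bar> \<le> d)
               \<Longrightarrow> t \<in> {0..1} \<Longrightarrow> \<bar>T u t - T v t\<bar> \<le> C * d"
  shows "\<exists>u\<in>Dom r. \<forall>t\<in>{0..1}. \<bar>T u t - u t\<bar> \<le> L / real n"
proof -
  define Q where "Q = {c::nat\<Rightarrow>real. (\<forall>j\<le>n. \<bar>c j\<bar> \<le> r) \<and> (\<forall>j>n. c j = 0)}"
  define Lc where "Lc c t = (\<Sum>j\<le>n. c j * hat (real n * t) j)" for c :: "nat \<Rightarrow> real" and t :: real
  have n0: "real n > 0" using n by simp
  have hs: "t \<in> {0..1} \<Longrightarrow> (\<Sum>j\<le>n. hat (real n * t) j) = 1" for t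
    by (rule hat_sum) (use n0 in \<open>auto simp: mult_le_cancel_left1\<close>)
  have LcD: "Lc c \<in> Dom r" if c: "c \<in> Q" for c
  proof -
    have "continuous_on {0..1} (Lc c)"
      unfolding Lc_def[abs_def] by (intro continuous_intros hat_cont)
    moreover have "\<bar>Lc c t\<bar> \<le> r" if t: "t \<in> {0..1}" for t
    proof -
      have "\<bar>Lc c t\<bar> \<le> (\<Sum>j\<le>n. \<bar>c j * hat (real n * t) j\<bar>)" unfolding Lc_def by (rule sum_abs)
      also have "\<dots> \<le> (\<Sum>j\<le>n. r * hat (real n * t) j)"
        using c unfolding Q_def by (intro sum_mono) (auto simp: abs_mult hat_nonneg intro!: mult_right_mono)
      also have "\<dots> = r" using hs[OF t] by (simp add: sum_distrib_left[symmetric])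
      finally show ?thesis .
    qed
    ultimately show ?thesis unfolding Dom_def by auto
  qed
  have Lcdiff: "\<bar>Lc c s - Lc c' s\<bar> \<le> (\<Sum>i\<le>n. \<bar>c i - c' i\<bar>)" for c c' s
  proof -
    have "\<bar>Lc c s - Lc c' s\<bar> = \<bar>\<Sum>j\<le>n. (c j - c' j) * hat (real n * s) j\<bar>"
      unfolding Lc_def by (simp add: sum_subtractf[symmetric] left_diff_distrib)
    also have "\<dots> \<le> (\<Sum>j\<le>n. \<bar>(c j - c' j) * hat (real n * s) j\<bar>)" by (rule sum_abs)
    also have "\<dots> \<le> (\<Sum>i\<le>n. \<bar>c i - c' i\<bar>)"
      by (intro sum_mono) (auto simp: abs_mult hat_nonneg hat_le1 intro!: mult_left_le)
    finally show ?thesis .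
  qed
  define Phi where "Phi c = (\<lambda>j. if j \<le> n then T (Lc c) (real j / real n) else 0)" for c
  have jn: "j \<le> n \<Longrightarrow> real j / real n \<in> {0..1}" for j using n0 by (auto simp: divide_le_eq_1)
  have PhiQ: "Phi ` Q \<subseteq> Q"
    unfolding Phi_def Q_def using Ta LcD[unfolded Q_def] jn by auto
  have contPhi: "continuous_on Q Phi"
  proof (unfold Phi_def, rule continuous_on_coordinatewise_then_product)
    fix j
    show "continuous_on Q (\<lambda>c. if j \<le> n then T (Lc c) (real j / real n) else 0)"
    proof (cases "j \<le> n")
      case False then show ?thesis by simp
    next
      case True
      let ?h = "\<lambda>c. T (Lc c) (real j / real n)"
      have "continuous_on Q ?h"
        unfolding continuous_on_def
      proof
        fix c0 assume c0: "c0 \<in> Q"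
        define g where "g c = C * (\<Sum>i\<le>n. \<bar>c i - c0 i\<bar>)" for c :: "nat \<Rightarrow> real"
        have "continuous_on UNIV g" unfolding g_def by (intro continuous_intros coord_cont)
        then have "(g \<longlongrightarrow> g c0) (at c0 within Q)"
          by (meson UNIV_I continuous_on_def tendsto_within_subset subset_UNIV)
        then have g0: "(g \<longlongrightarrow> 0) (at c0 within Q)" by (simp add: g_def)
        have ev: "eventually (\<lambda>c. norm (?h c - ?h c0) \<le> g c) (at c0 within Q)"
        proof -
          have "norm (?h c - ?h c0) \<le> g c" if "c \<in> Q" for c
            unfolding g_def real_norm_def
            by (rule Tc[OF LcD[OF that] LcD[OF c0] Lcdiff jn[OF True]])
          then show ?thesis unfolding eventually_at_filter by (auto intro: always_eventually)
        qed
        show "(?h \<longlongrightarrow> ?h c0) (at c0 within Q)"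
          by (rule LIM_zero_cancel[OF Lim_null_comparison[OF ev g0]])
      qed
      then show ?thesis using True by simp
    qed
  qed
  obtain c where cQ: "c \<in> Q" and cfix: "Phi c = c"
    using brouwer_ncube[OF Q_def r contPhi PhiQ] by auto
  define u where "u = Lc c"
  have uD: "u \<in> Dom r" unfolding u_def by (rule LcD[OF cQ])
  have cj: "j \<le> n \<Longrightarrow> c j = T u (real j / real n)" for j
    using cfix unfolding Phi_def u_def by (metis (mono_tags, lifting))
  have ueq: "u t = (\<Sum>j\<le>n. T u (real j / real n) * hat (real n * t) j)" for t
  proof -
    have "u t = (\<Sum>j\<le>n. c j * hat (real n * t) j)" by (simp add: u_def Lc_def)
    also have "\<dots> = (\<Sum>j\<le>n. T u (real j / real n) * hat (real n * t) j)"
      by (rule sum.cong) (auto simp: cj)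
    finally show ?thesis .
  qed
  have "\<bar>T u t - u t\<bar> \<le> L / real n" if t: "t \<in> {0..1}" for t
  proof -
    have "T u t - u t = T u t * (\<Sum>j\<le>n. hat (real n * t) j) - u t" using hs[OF t] by simp
    also have "\<dots> = (\<Sum>j\<le>n. (T u t - T u (real j / real n)) * hat (real n * t) j)"
      unfolding ueq[of t] by (simp add: left_diff_distrib sum_subtractf sum_distrib_left)
    also have "\<bar>\<dots>\<bar> \<le> (\<Sum>j\<le>n. \<bar>(T u t - T u (real j / real n)) * hat (real n * t) j\<bar>)" by (rule sum_abs)
    also have "\<dots> \<le> (\<Sum>j\<le>n. L / real n * hat (real n * t) j)"
    proof (rule sum_mono)
      fix j assume j: "j \<in> {..n}"
      show "\<bar>(T u t - T u (real j / real n)) * hat (real n * t) j\<bar> \<le> L / real n * hat (real n * t) j"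
      proof (cases "hat (real n * t) j = 0")
        case True then show ?thesis by simp
      next
        case False
        then have "\<bar>real n * t - real j\<bar> < 1" by (rule hat_supp)
        then have "\<bar>t - real j / real n\<bar> \<le> 1 / real n"
        proof -
          have "t - real j / real n = (real n * t - real j) / real n" using n0 by (simp add: field_simps)
          then have "\<bar>t - real j / real n\<bar> = \<bar>real n * t - real j\<bar> / real n" using n0 by simp
          also have "\<dots> \<le> 1 / real n" using \<open>\<bar>real n * t - real j\<bar> < 1\<close> n0 by (intro divide_right_mono) auto
          finally show ?thesis .
        qed
        then have "\<bar>T u t - T u (real j / real n)\<bar> \<le> L / real n"
        proof -
          have "\<bar>T u t - T u (real j / real n)\<bar> \<le> L * \<bar>t - real j / real n\<bar>" using Tb[OF uD t jn] j by auto
          also have "\<dots> \<le> L * (1 / real n)" using \<open>\<bar>t - real j / real n\<bar> \<le> 1 / real n\<close> L by (rule mult_left_mono)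
          finally show ?thesis by simp
        qed
        then have "\<bar>T u t - T u (real j / real n)\<bar> * hat (real n * t) j \<le> L / real n * hat (real n * t) j"
          by (rule mult_right_mono[OF _ hat_nonneg])
        then show ?thesis by (simp add: abs_mult hat_nonneg)
      qed
    qed
    also have "\<dots> = L / real n * (\<Sum>j\<le>n. hat (real n * t) j)" by (rule sum_distrib_left[symmetric])
    also have "\<dots> = L / real n" using hs[OF t] by simp
    finally show ?thesis .
  qed
  then show ?thesis using uD by blast
qed

definition dd :: "nat \<Rightarrow> real" where
  "dd k = (case prod_decode k of (i, m) \<Rightarrow> min 1 (real i / real (Suc m)))"

lemma dd_in: "dd k \<in> {0..1}"
  unfolding dd_def by (auto split: prod.split)

lemma dd_grid: "i \<le> Suc m \<Longrightarrow> dd (prod_encode (i, m)) = real i / real (Suc m)"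
  unfolding dd_def by (simp add: prod_encode_inverse divide_le_eq_1)

lemma grid_near:
  assumes t: "t \<in> {0..1}"
  obtains i where "i \<le> Suc m" "\<bar>t - real i / real (Suc m)\<bar> \<le> 1 / real (Suc m)"
proof -
  define i where "i = nat \<lfloor>t * real (Suc m)\<rfloor>"
  have f0: "0 \<le> \<lfloor>t * real (Suc m)\<rfloor>" using t by auto
  have ri: "real i = of_int \<lfloor>t * real (Suc m)\<rfloor>" unfolding i_def using f0 by simp
  have a: "real i \<le> t * real (Suc m)" "t * real (Suc m) < real i + 1"
    unfolding ri by linarith+
  have "real i \<le> real (Suc m)" using a(1) t by (smt (verit) mult_left_le_one_le of_nat_0_le_iff atLeastAtMost_iff)
  then have "i \<le> Suc m" by linarith
  moreover have "\<bar>t - real i / real (Suc m)\<bar> \<le> 1 / real (Suc m)"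
  proof -
    have "t - real i / real (Suc m) = (t * real (Suc m) - real i) / real (Suc m)" by (simp add: field_simps)
    moreover have "0 \<le> t * real (Suc m) - real i" "t * real (Suc m) - real i \<le> 1" using a by auto
    ultimately show ?thesis by (simp add: divide_right_mono)
  qed
  ultimately show ?thesis using that by blast
qed

lemma abs_tri3: "\<bar>a - d\<bar> \<le> \<bar>a - b\<bar> + \<bar>b - c\<bar> + \<bar>c - d\<bar>" for a b c d :: real
  using abs_triangle_ineq[of "a - b" "b - d"] abs_triangle_ineq[of "b - c" "c - d"] by simp

lemma abs_tri4: "\<bar>a - e\<bar> \<le> \<bar>a - b\<bar> + \<bar>b - c\<bar> + \<bar>c - d\<bar> + \<bar>d - e\<bar>" for a b c d e :: real
  using abs_tri3[where a=a and b=b and c=c and d=e] abs_triangle_ineq[of "c - d" "d - e"] by simp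

lemma fix_exists:
  fixes T :: "(real \<Rightarrow> real) \<Rightarrow> (real \<Rightarrow> real)" and r L C :: real
  assumes r: "r > 0" and L: "L \<ge> 0" and C: "C \<ge> 0"
    and Ta: "\<And>u t. u \<in> Dom r \<Longrightarrow> t \<in> {0..1} \<Longrightarrow> \<bar>T u t\<bar> \<le> r"
    and Tb: "\<And>u t t'. u \<in> Dom r \<Longrightarrow> t \<in> {0..1} \<Longrightarrow> t' \<in> {0..1} \<Longrightarrow> \<bar>T u t - T u t'\<bar> \<le> L * \<bar>t - t'\<bar>"
    and Tc: "\<And>u v d t. u \<in> Dom r \<Longrightarrow> v \<in> Dom r \<Longrightarrow> (\<And>s. s \<in> {0..1} \<Longrightarrow> \<bar>u s - v s\<bar> \<le> d)
               \<Longrightarrow> t \<in> {0..1} \<Longrightarrow> \<bar>T u t - T v t\<bar> \<le> C * d"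
  shows "\<exists>w\<in>Dom r. \<forall>t\<in>{0..1}. T w t = w t"
proof -
  have "\<forall>n. \<exists>u. u \<in> Dom r \<and> (\<forall>t\<in>{0..1}. \<bar>T u t - u t\<bar> \<le> L / real (Suc n))"
  proof
    fix n
    have "\<exists>u\<in>Dom r. \<forall>t\<in>{0..1}. \<bar>T u t - u t\<bar> \<le> L / real (Suc n)"
      by (rule approx_fix[where T=T and n="Suc n", OF r L C _ Ta Tb Tc]) auto
    then show "\<exists>u. u \<in> Dom r \<and> (\<forall>t\<in>{0..1}. \<bar>T u t - u t\<bar> \<le> L / real (Suc n))" by blast
  qed
  then obtain U where UD: "\<And>n. U n \<in> Dom r" and Uapp: "\<And>n t. t \<in> {0..1} \<Longrightarrow> \<bar>T (U n) t - U n t\<bar> \<le> L / real (Suc n)"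
    by metis
  define V where "V n = T (U n)" for n
  have Vb: "t \<in> {0..1} \<Longrightarrow> \<bar>V n t\<bar> \<le> r" for n t unfolding V_def by (rule Ta[OF UD])
  have Vl: "t \<in> {0..1} \<Longrightarrow> t' \<in> {0..1} \<Longrightarrow> \<bar>V n t - V n t'\<bar> \<le> L * \<bar>t - t'\<bar>" for n t t'
    unfolding V_def by (rule Tb[OF UD])
  define p where "p n = (\<lambda>k. V n (dd k))" for n
  define Kc where "Kc = PiE UNIV (\<lambda>_::nat. {-r..r})"
  have "compactin (product_topology (\<lambda>_. euclideanreal) UNIV) Kc"
    unfolding Kc_def by (simp add: compactin_PiE)
  then have "compact Kc" by (simp add: euclidean_product_topology)
  moreover have "\<forall>n. p n \<in> Kc"
  proof
    fix n
    have "\<And>k. \<bar>V n (dd k)\<bar> \<le> r" using Vb dd_in by blast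
    then show "p n \<in> Kc" unfolding Kc_def p_def by (auto simp: abs_le_iff) (smt (verit))
  qed
  ultimately obtain l \<sigma> where "l \<in> Kc" and sm: "strict_mono \<sigma>" and lim: "(p \<circ> \<sigma>) \<longlonglongrightarrow> l"
    using seq_compactE[OF compact_imp_seq_compact] by metis
  have limk: "(\<lambda>n. V (\<sigma> n) (dd k)) \<longlonglongrightarrow> l k" for k
  proof -
    have "(\<lambda>n. (p \<circ> \<sigma>) n k) \<longlonglongrightarrow> l k"
      by (rule continuous_on_tendsto_compose[OF continuous_on_product_coordinates lim]) auto
    then show ?thesis by (simp add: p_def)
  qed
  have cauchy: "\<forall>e>0. \<exists>N. \<forall>a b t. N \<le> a \<and> N \<le> b \<and> t \<in> {0..1} \<longrightarrow> dist (V (\<sigma> a) t) (V (\<sigma> b) t) < e"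
  proof (intro allI impI)
    fix e :: real assume e: "e > 0"
    obtain m :: nat where m: "3 * L / e < real m" using reals_Archimedean2 by blast
    have Lm: "L / real (Suc m) < e / 3"
    proof -
      have "3 * L < e * real m" using m e by (simp add: field_simps)
      moreover have "e * real m \<le> e * real (Suc m)" using e by (intro mult_left_mono) auto
      ultimately have "3 * L < e * real (Suc m)" by linarith
      then show ?thesis using e by (simp add: field_simps)
    qed
    have "\<forall>i\<in>{..Suc m}. eventually (\<lambda>n. dist (V (\<sigma> n) (dd (prod_encode (i, m)))) (l (prod_encode (i, m))) < e/6) sequentially"
    proof
      fix i assume "i \<in> {..Suc m}"
      have "e/6 > 0" using e by simp
      then show "eventually (\<lambda>n. dist (V (\<sigma> n) (dd (prod_encode (i, m)))) (l (prod_encode (i, m))) < e/6) sequentially"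
        using limk[of "prod_encode (i,m)"] unfolding tendsto_iff by blast
    qed
    then have "eventually (\<lambda>n. \<forall>i\<in>{..Suc m}. dist (V (\<sigma> n) (dd (prod_encode (i, m)))) (l (prod_encode (i, m))) < e/6) sequentially"
      by (rule eventually_ball_finite[rotated]) auto
    then obtain N where N0: "\<forall>n\<ge>N. \<forall>i\<in>{..Suc m}. dist (V (\<sigma> n) (dd (prod_encode (i, m)))) (l (prod_encode (i, m))) < e/6"
      unfolding eventually_sequentially by blast
    have N: "dist (V (\<sigma> n) (real i / real (Suc m))) (l (prod_encode (i, m))) < e/6" if "N \<le> n" "i \<le> Suc m" for n i
    proof -
      have "dist (V (\<sigma> n) (dd (prod_encode (i, m)))) (l (prod_encode (i, m))) < e/6" using N0 that by auto
      then show ?thesis using dd_grid[OF that(2)] by simp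
    qed
    show "\<exists>N. \<forall>a b t. N \<le> a \<and> N \<le> b \<and> t \<in> {0..1} \<longrightarrow> dist (V (\<sigma> a) t) (V (\<sigma> b) t) < e"
    proof (intro exI allI impI)
      fix a b :: nat and t :: real assume abt: "N \<le> a \<and> N \<le> b \<and> t \<in> {0..1}"
      then have t: "t \<in> {0..1}" by auto
      obtain i where i: "i \<le> Suc m" and ti: "\<bar>t - real i / real (Suc m)\<bar> \<le> 1 / real (Suc m)"
        using grid_near[OF t] by blast
      let ?x = "real i / real (Suc m)"
      have x01: "?x \<in> {0..1}" using i by (auto simp: divide_le_eq_1)
      have l1: "\<bar>V n t - V n ?x\<bar> \<le> L / real (Suc m)" for n
      proof -
        have "\<bar>V n t - V n ?x\<bar> \<le> L * \<bar>t - ?x\<bar>" by (rule Vl[OF t x01])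
        also have "\<dots> \<le> L * (1 / real (Suc m))" using ti L by (rule mult_left_mono)
        finally show ?thesis by simp
      qed
      have "dist (V (\<sigma> a) t) (V (\<sigma> b) t) \<le> \<bar>V (\<sigma> a) t - V (\<sigma> a) ?x\<bar> + dist (V (\<sigma> a) ?x) (l (prod_encode (i, m)))
            + dist (V (\<sigma> b) ?x) (l (prod_encode (i, m))) + \<bar>V (\<sigma> b) t - V (\<sigma> b) ?x\<bar>"
        unfolding dist_real_def
        using abs_tri4[where a="V (\<sigma> a) t" and b="V (\<sigma> a) ?x" and c="l (prod_encode (i, m))" and d="V (\<sigma> b) ?x" and e="V (\<sigma> b) t"]
        by (simp add: abs_minus_commute)
      also have "\<dots> < L / real (Suc m) + e/6 + e/6 + L / real (Suc m)"
        using l1[of "\<sigma> a"] l1[of "\<sigma> b"] N[of a i] N[of b i] abt i by linarith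
      also have "\<dots> < e" using Lm by linarith
      finally show "dist (V (\<sigma> a) t) (V (\<sigma> b) t) < e" .
    qed
  qed
  obtain w where wlim: "\<And>e. e > 0 \<Longrightarrow> \<exists>N. \<forall>n x. N \<le> n \<and> x \<in> {0..1} \<longrightarrow> dist (V (\<sigma> n) x) (w x) < e"
    using uniformly_convergent_eq_cauchy[of "\<lambda>x. x \<in> {0..1}" "\<lambda>n. V (\<sigma> n)"] cauchy by metis
  have wb: "\<bar>w t\<bar> \<le> r" if t: "t \<in> {0..1}" for t
  proof (rule ccontr)
    assume "\<not> \<bar>w t\<bar> \<le> r"
    then obtain N where "\<forall>n x. N \<le> n \<and> x \<in> {0..1} \<longrightarrow> dist (V (\<sigma> n) x) (w x) < \<bar>w t\<bar> - r"
      using wlim[of "\<bar>w t\<bar> - r"] by auto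
    then have "dist (V (\<sigma> N) t) (w t) < \<bar>w t\<bar> - r" using t by auto
    then show False using Vb[OF t, of "\<sigma> N"] by (simp add: dist_real_def)
  qed
  have wl: "\<bar>w t - w t'\<bar> \<le> L * \<bar>t - t'\<bar>" if t: "t \<in> {0..1}" and t': "t' \<in> {0..1}" for t t'
  proof (rule field_le_epsilon)
    fix e :: real assume e: "e > 0"
    obtain N where "\<forall>n x. N \<le> n \<and> x \<in> {0..1} \<longrightarrow> dist (V (\<sigma> n) x) (w x) < e/2"
      using wlim[of "e/2"] e by auto
    then have "dist (V (\<sigma> N) t) (w t) < e/2" "dist (V (\<sigma> N) t') (w t') < e/2" using t t' by auto
    then show "\<bar>w t - w t'\<bar> \<le> L * \<bar>t - t'\<bar> + e"
      using Vl[OF t t', of "\<sigma> N"] abs_tri3[where a="w t" and b="V (\<sigma> N) t" and c="V (\<sigma> N) t'" and d="w t'"]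
      by (simp add: dist_real_def abs_minus_commute)
  qed
  have wc: "continuous_on {0..1} w"
    unfolding continuous_on_iff
  proof (intro ballI allI impI)
    fix x e :: real assume x: "x \<in> {0..1}" and e: "e > 0"
    show "\<exists>d>0. \<forall>x'\<in>{0..1}. dist x' x < d \<longrightarrow> dist (w x') (w x) < e"
    proof (intro exI conjI ballI impI)
      show "e / (L + 1) > 0" using e L by simp
      fix x' :: real assume x': "x' \<in> {0..1}" and d: "dist x' x < e / (L + 1)"
      have "dist (w x') (w x) \<le> L * dist x' x" using wl[OF x' x] by (simp add: dist_real_def)
      also have "\<dots> \<le> (L + 1) * dist x' x" by (simp add: distrib_right)
      also have "\<dots> < (L + 1) * (e / (L + 1))" using d L by (intro mult_strict_left_mono) auto
      also have "\<dots> = e" using L by simp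
      finally show "dist (w x') (w x) < e" .
    qed
  qed
  have wD: "w \<in> Dom r" unfolding Dom_def using wb wc by auto
  have "T w t = w t" if t: "t \<in> {0..1}" for t
  proof -
    have "\<bar>T w t - w t\<bar> \<le> 0"
    proof (rule field_le_epsilon)
      fix e :: real assume e: "e > 0"
      define \<delta> where "\<delta> = e / (2 * C + 2)"
      have \<delta>: "\<delta> > 0" using e C unfolding \<delta>_def by simp
      obtain N where N: "\<forall>n x. N \<le> n \<and> x \<in> {0..1} \<longrightarrow> dist (V (\<sigma> n) x) (w x) < \<delta>"
        using wlim[OF \<delta>] by auto
      obtain M :: nat where M: "L / \<delta> < real M" using reals_Archimedean2 by blast
      define n where "n = max N M"
      have "M \<le> \<sigma> n" using seq_suble[OF sm, of n] unfolding n_def by linarith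
      then have "L / real (Suc (\<sigma> n)) \<le> \<delta>"
      proof -
        assume "M \<le> \<sigma> n"
        then have "real M \<le> real (\<sigma> n)" by simp
        then have "L / \<delta> < real (Suc (\<sigma> n))" using M by simp
        then have "L < \<delta> * real (Suc (\<sigma> n))" using \<delta> by (simp add: divide_less_eq mult.commute)
        then show ?thesis by (simp add: divide_le_eq)
      qed
      have close: "\<bar>U (\<sigma> n) s - w s\<bar> \<le> 2 * \<delta>" if s: "s \<in> {0..1}" for s
      proof -
        have "\<bar>U (\<sigma> n) s - V (\<sigma> n) s\<bar> \<le> L / real (Suc (\<sigma> n))"
          using Uapp[OF s, of "\<sigma> n"] unfolding V_def by (simp add: abs_minus_commute)
        moreover have "dist (V (\<sigma> n) s) (w s) < \<delta>" using N s unfolding n_def by auto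
        ultimately show ?thesis using \<open>L / real (Suc (\<sigma> n)) \<le> \<delta>\<close> by (simp add: dist_real_def)
      qed
      have "\<bar>T (U (\<sigma> n)) t - T w t\<bar> \<le> C * (2 * \<delta>)" by (rule Tc[OF UD wD close t])
      moreover have "dist (V (\<sigma> n) t) (w t) < \<delta>" using N t unfolding n_def by auto
      ultimately have "\<bar>T w t - w t\<bar> \<le> C * (2 * \<delta>) + \<delta>" unfolding V_def by (simp add: dist_real_def)
      also have "\<dots> \<le> \<delta> * (2 * C + 2)" using \<delta> by (simp add: algebra_simps)
      also have "\<dots> = e" unfolding \<delta>_def using C by simp
      finally show "\<bar>T w t - w t\<bar> \<le> 0 + e" by simp
    qed
    then show ?thesis by simp
  qed
  then show ?thesis using wD by blast
qed


lemma lip_cont: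
  fixes f :: "real \<Rightarrow> real"
  assumes K: "K \<ge> 0" and l: "\<And>t t'. t \<in> S \<Longrightarrow> t' \<in> S \<Longrightarrow> \<bar>f t - f t'\<bar> \<le> K * \<bar>t - t'\<bar>"
  shows "continuous_on S f"
  unfolding continuous_on_iff
proof (intro ballI allI impI)
  fix x e :: real assume x: "x \<in> S" and e: "e > 0"
  show "\<exists>d>0. \<forall>x'\<in>S. dist x' x < d \<longrightarrow> dist (f x') (f x) < e"
  proof (intro exI conjI ballI impI)
    show "e / (K + 1) > 0" using e K by simp
    fix x' :: real assume x': "x' \<in> S" and d: "dist x' x < e / (K + 1)"
    have "dist (f x') (f x) \<le> K * dist x' x" using l[OF x' x] by (simp add: dist_real_def)
    also have "\<dots> \<le> (K + 1) * dist x' x" by (simp add: distrib_right)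
    also have "\<dots> < (K + 1) * (e / (K + 1))" using d K by (intro mult_strict_left_mono) auto
    also have "\<dots> = e" using K by simp
    finally show "dist (f x') (f x) < e" .
  qed
qed

lemma Gf_cont: "u \<in> Dom r \<Longrightarrow> continuous_on {0..1} (Gf u)"
  by (rule lip_cont[of "cosh 1 * exp (2*r)"]) (auto intro: Gf_lip_t simp: cosh_real_nonneg)

lemma sup_attained:
  fixes f :: "real \<Rightarrow> real"
  assumes "continuous_on {0..1} f"
  shows "\<exists>t\<in>{0..1}. \<bar>f t\<bar> = supnorm f \<and> (\<forall>s\<in>{0..1}. \<bar>f s\<bar> \<le> \<bar>f t\<bar>)"
proof -
  have "continuous_on {0..1} (\<lambda>t. \<bar>f t\<bar>)" using assms by (intro continuous_intros)
  then obtain t where t: "t \<in> {0..1}" and mx: "\<forall>s\<in>{0..1}. \<bar>f s\<bar> \<le> \<bar>f t\<bar>"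
    using continuous_attains_sup[of "{0..1::real}" "\<lambda>t. \<bar>f t\<bar>"] by auto
  have "supnorm f = \<bar>f t\<bar>"
    unfolding supnorm_def by (rule cSup_eq_maximum) (use t mx in auto)
  then show ?thesis using t mx by auto
qed

lemma supnorm_ge:
  fixes f :: "real \<Rightarrow> real"
  assumes "continuous_on {0..1} f" "t \<in> {0..1}"
  shows "\<bar>f t\<bar> \<le> supnorm f"
  using sup_attained[OF assms(1)] assms(2) by auto

lemma supnorm_le:
  fixes f :: "real \<Rightarrow> real"
  assumes "\<And>t. t \<in> {0..1} \<Longrightarrow> \<bar>f t\<bar> \<le> B"
  shows "supnorm f \<le> B"
  unfolding supnorm_def by (rule cSUP_least) (use assms in auto)

locale setting =
  fixes r t0 :: real
  assumes r: "r > 0" and t0: "t0 \<in> {0..1}" and Fpos: "FF r t0 > 0"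
begin

definition m where "m = FF r t0"
definition CB where "CB = cosh 1 * cosh 1 / sinh 1 * exp (2*r)"
definition CL where "CL = cosh 1 * cosh 1 / sinh 1 * (2 * exp (4*r))"

lemma m_pos: "m > 0" using Fpos by (simp add: m_def)
lemma CL_nonneg: "CL \<ge> 0" unfolding CL_def using sinh1_pos by simp
lemma CB_nonneg: "CB \<ge> 0" unfolding CB_def using sinh1_pos by simp

lemma N_ge: "u \<in> Dom r \<Longrightarrow> t \<in> {0..1} \<Longrightarrow> \<bar>Gf u t\<bar> \<le> supnorm (Gf u)"
  by (rule supnorm_ge[OF Gf_cont])

lemma N_pos: "u \<in> Dom r \<Longrightarrow> supnorm (Gf u) \<ge> m"
  using N_ge[of u t0] Gf_ge_FF[of u r t0] t0 unfolding m_def by auto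

lemma N_le: "u \<in> Dom r \<Longrightarrow> supnorm (Gf u) \<le> CB"
  unfolding CB_def by (rule supnorm_le) (rule Gf_bound)

lemma N_lip:
  assumes u: "u \<in> Dom r" and v: "v \<in> Dom r" and d: "\<And>s. s \<in> {0..1} \<Longrightarrow> \<bar>u s - v s\<bar> \<le> d"
  shows "\<bar>supnorm (Gf u) - supnorm (Gf v)\<bar> \<le> CL * d"
proof -
  have G: "\<bar>Gf u t - Gf v t\<bar> \<le> CL * d" if "t \<in> {0..1}" for t
    unfolding CL_def by (rule Gf_lip_u[OF u v d that])
  have "supnorm (Gf u) \<le> supnorm (Gf v) + CL * d"
    by (rule supnorm_le) (use G N_ge[OF v] in fastforce)
  moreover have "supnorm (Gf v) \<le> supnorm (Gf u) + CL * d"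
    by (rule supnorm_le) (use G N_ge[OF u] in fastforce)
  ultimately show ?thesis by linarith
qed

definition TT where "TT \<sigma> u t = \<sigma> * r * Gf u t / supnorm (Gf u)"

lemma Npos': "u \<in> Dom r \<Longrightarrow> supnorm (Gf u) > 0" using N_pos m_pos by fastforce

lemma Ta: "\<bar>\<sigma>\<bar> = 1 \<Longrightarrow> u \<in> Dom r \<Longrightarrow> t \<in> {0..1} \<Longrightarrow> \<bar>TT \<sigma> u t\<bar> \<le> r"
proof -
  assume s: "\<bar>\<sigma>\<bar> = 1" and u: "u \<in> Dom r" and t: "t \<in> {0..1}"
  have "\<bar>TT \<sigma> u t\<bar> = r * (\<bar>Gf u t\<bar> / supnorm (Gf u))"
    unfolding TT_def using s r Npos'[OF u] by (simp add: abs_mult)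
  also have "\<dots> \<le> r * 1" using N_ge[OF u t] Npos'[OF u] r by (intro mult_left_mono) auto
  finally show ?thesis by simp
qed

lemma Tb: "\<bar>\<sigma>\<bar> = 1 \<Longrightarrow> u \<in> Dom r \<Longrightarrow> t \<in> {0..1} \<Longrightarrow> t' \<in> {0..1} \<Longrightarrow>
    \<bar>TT \<sigma> u t - TT \<sigma> u t'\<bar> \<le> (r * (cosh 1 * exp (2*r)) / m) * \<bar>t - t'\<bar>"
proof -
  assume s: "\<bar>\<sigma>\<bar> = 1" and u: "u \<in> Dom r" and t: "t \<in> {0..1}" and t': "t' \<in> {0..1}"
  have "TT \<sigma> u t - TT \<sigma> u t' = \<sigma> * r * (Gf u t - Gf u t') / supnorm (Gf u)"
    unfolding TT_def by (simp add: diff_divide_distrib right_diff_distrib)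
  then have "\<bar>TT \<sigma> u t - TT \<sigma> u t'\<bar> = r * \<bar>Gf u t - Gf u t'\<bar> / supnorm (Gf u)"
    using s r Npos'[OF u] by (simp add: abs_mult)
  also have "\<dots> \<le> r * (cosh 1 * exp (2*r) * \<bar>t - t'\<bar>) / m"
    using Gf_lip_t[OF u t t'] N_pos[OF u] m_pos r
    by (intro frac_le mult_left_mono) (auto simp: cosh_real_nonneg)
  finally show ?thesis by simp
qed

lemma Tc:
  assumes s: "\<bar>\<sigma>\<bar> = 1" and u: "u \<in> Dom r" and v: "v \<in> Dom r"
    and d: "\<And>s. s \<in> {0..1} \<Longrightarrow> \<bar>u s - v s\<bar> \<le> d" and t: "t \<in> {0..1}"
  shows "\<bar>TT \<sigma> u t - TT \<sigma> v t\<bar> \<le> (r * (CL / m + CB * CL / (m * m))) * d"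
proof -
  define Nu where "Nu = supnorm (Gf u)"
  define Nv where "Nv = supnorm (Gf v)"
  have Nu: "Nu \<ge> m" "Nu > 0" using N_pos[OF u] Npos'[OF u] unfolding Nu_def by auto
  have Nv: "Nv \<ge> m" "Nv > 0" using N_pos[OF v] Npos'[OF v] unfolding Nv_def by auto
  have d0: "d \<ge> 0" using d[of 0] by fastforce
  have G: "\<bar>Gf u t - Gf v t\<bar> \<le> CL * d" unfolding CL_def by (rule Gf_lip_u[OF u v d t])
  have NN: "\<bar>Nv - Nu\<bar> \<le> CL * d" using N_lip[OF v u, of d] d unfolding Nu_def Nv_def by (force simp: abs_minus_commute)
  have Gv: "\<bar>Gf v t\<bar> \<le> CB" using N_ge[OF v t] N_le[OF v] by linarith
  have eq: "Gf u t / Nu - Gf v t / Nv = (Gf u t - Gf v t) / Nu + Gf v t * (Nv - Nu) / (Nu * Nv)"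
    using Nu Nv by (simp add: field_simps)
  have "\<bar>Gf u t / Nu - Gf v t / Nv\<bar> \<le> \<bar>Gf u t - Gf v t\<bar> / Nu + \<bar>Gf v t\<bar> * \<bar>Nv - Nu\<bar> / (Nu * Nv)"
    unfolding eq using Nu Nv abs_triangle_ineq[of "(Gf u t - Gf v t) / Nu" "Gf v t * (Nv - Nu) / (Nu * Nv)"]
    by (simp add: abs_mult)
  also have "\<dots> \<le> CL * d / m + CB * (CL * d) / (m * m)"
  proof (rule add_mono)
    show "\<bar>Gf u t - Gf v t\<bar> / Nu \<le> CL * d / m"
      using G Nu m_pos by (intro frac_le) auto
    show "\<bar>Gf v t\<bar> * \<bar>Nv - Nu\<bar> / (Nu * Nv) \<le> CB * (CL * d) / (m * m)"
      using G Gv NN Nu Nv m_pos CB_nonneg by (intro frac_le mult_mono mult_pos_pos) auto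
  qed
  also have "\<dots> = (CL / m + CB * CL / (m * m)) * d" by (simp add: field_simps)
  finally have X: "\<bar>Gf u t / Nu - Gf v t / Nv\<bar> \<le> (CL / m + CB * CL / (m * m)) * d" .
  have "TT \<sigma> u t - TT \<sigma> v t = \<sigma> * r * (Gf u t / Nu - Gf v t / Nv)"
    unfolding TT_def Nu_def Nv_def by (simp add: right_diff_distrib)
  then have "\<bar>TT \<sigma> u t - TT \<sigma> v t\<bar> = r * \<bar>Gf u t / Nu - Gf v t / Nv\<bar>"
    using s r by (simp add: abs_mult)
  also have "\<dots> \<le> r * ((CL / m + CB * CL / (m * m)) * d)" using X r by (intro mult_left_mono) auto
  finally show ?thesis by simp
qed

lemma exists_sol:
  assumes s: "\<bar>\<sigma>\<bar> = 1"
  shows "\<exists>w. w \<in> Dom r \<and> supnorm w = r \<and> solves (\<sigma> * r / supnorm (Gf w)) w"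
proof -
  have L: "r * (cosh 1 * exp (2*r)) / m \<ge> 0" using r m_pos by (simp add: cosh_real_nonneg)
  have C: "r * (CL / m + CB * CL / (m * m)) \<ge> 0" using r m_pos CL_nonneg CB_nonneg by simp
  obtain w where wD: "w \<in> Dom r" and wf: "\<And>t. t \<in> {0..1} \<Longrightarrow> TT \<sigma> w t = w t"
    using fix_exists[where T="TT \<sigma>", OF r L C Ta[OF s] Tb[OF s] Tc[OF s]] by blast
  have sol: "solves (\<sigma> * r / supnorm (Gf w)) w"
    unfolding solves_Gf using wf by (auto simp: TT_def)
  obtain t1 where t1: "t1 \<in> {0..1}" "\<bar>Gf w t1\<bar> = supnorm (Gf w)"
    using sup_attained[OF Gf_cont[OF wD]] by auto
  have "supnorm w = r"
  proof (rule antisym)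
    show "supnorm w \<le> r" by (rule supnorm_le) (use wf Ta[OF s wD] in force)
    have "\<bar>w t1\<bar> = \<bar>\<sigma>\<bar> * r * \<bar>Gf w t1\<bar> / supnorm (Gf w)"
      using wf[OF t1(1), symmetric] r Npos'[OF wD] unfolding TT_def by (simp add: abs_mult)
    then have "\<bar>w t1\<bar> = r" using s t1(2) Npos'[OF wD] by simp
    then show "r \<le> supnorm w" using supnorm_ge[OF Dom_cont[OF wD] t1(1)] by simp
  qed
  then show ?thesis using wD sol by blast
qed

end


lemma bb_pos: "bb > 0" unfolding bb_def by simp
lemma bb_s: "3/2 * pi * s = bb * s" unfolding bb_def by simp

definition F1 :: "real \<Rightarrow> real" where
  "F1 s = (sinh s * sin (bb * s) - bb * cosh s * cos (bb * s)) / (1 + bb^2)"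
definition F2 :: "real \<Rightarrow> real" where
  "F2 s = (- sinh (1 - s) * sin (bb * s) - bb * cosh (1 - s) * cos (bb * s)) / (1 + bb^2)"

lemma bb_nz: "1 + bb^2 \<noteq> 0" by (smt (verit) zero_le_power2)

lemma F1_deriv: "(F1 has_real_derivative (cosh s * sin (bb * s))) (at s within A)"
proof -
  have "((\<lambda>s. sinh s * sin (bb * s) - bb * cosh s * cos (bb * s)) has_real_derivative
          (1 + bb^2) * (cosh s * sin (bb * s))) (at s within A)"
    by (auto intro!: derivative_eq_intros simp: algebra_simps power2_eq_square)
  from DERIV_cdivide[OF this, of "1 + bb^2"] show ?thesis
    using bb_nz unfolding F1_def[abs_def] by simp
qed

lemma F2_deriv: "(F2 has_real_derivative (cosh (1 - s) * sin (bb * s))) (at s within A)"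
proof -
  have "((\<lambda>s. - sinh (1 - s) * sin (bb * s) - bb * cosh (1 - s) * cos (bb * s)) has_real_derivative
          (1 + bb^2) * (cosh (1 - s) * sin (bb * s))) (at s within A)"
    by (auto intro!: derivative_eq_intros simp: algebra_simps power2_eq_square)
  from DERIV_cdivide[OF this, of "1 + bb^2"] show ?thesis
    using bb_nz unfolding F2_def[abs_def] by simp
qed

lemma int1: "a \<le> c \<Longrightarrow> integral {a..c} (\<lambda>s. cosh s * sin (bb * s)) = F1 c - F1 a"
  by (rule integral_unique, rule fundamental_theorem_of_calculus)
     (auto simp: has_real_derivative_iff_has_vector_derivative[symmetric] intro: F1_deriv)

lemma int2: "a \<le> c \<Longrightarrow> integral {a..c} (\<lambda>s. cosh (1 - s) * sin (bb * s)) = F2 c - F2 a"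
  by (rule integral_unique, rule fundamental_theorem_of_calculus)
     (auto simp: has_real_derivative_iff_has_vector_derivative[symmetric] intro: F2_deriv)

definition PP where "PP t = integral {0..2/3} (\<lambda>s. kern t s * sin (3/2 * pi * s))"
definition NN where "NN t = integral {2/3..1} (\<lambda>s. kern t s * sin (3/2 * pi * s))"

lemma FF_PN: "FF r t = exp (-2*r) * PP t + exp (2*r) * NN t"
  unfolding FF_def PP_def NN_def by simp

lemma sin23: "sin (bb * (2/3)) = 0" "cos (bb * (2/3)) = -1"
  unfolding bb_def by simp_all

lemma sin1: "sin bb = -1" "cos bb = 0"
proof -
  have e: "bb = pi/2 + pi" unfolding bb_def by simp
  show "sin bb = -1" by (simp only: e sin_periodic_pi sin_pi_half)
  show "cos bb = 0" by (simp only: e cos_periodic_pi cos_pi_half minus_zero)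
qed

lemma kint_cont: "continuous_on A (\<lambda>s. kern t s * sin (3/2 * pi * s))"
  by (intro continuous_intros kern_cont)

lemma int_left:
  assumes "0 \<le> a" "a \<le> c" "c \<le> t"
  shows "integral {a..c} (\<lambda>s. kern t s * sin (3/2 * pi * s)) = cosh (1 - t) / sinh 1 * (F1 c - F1 a)"
proof -
  have "integral {a..c} (\<lambda>s. kern t s * sin (3/2 * pi * s))
      = integral {a..c} (\<lambda>s. cosh (1 - t) / sinh 1 * (cosh s * sin (bb * s)))"
    using assms by (intro integral_cong) (auto simp: kern_alt bb_def)
  also have "\<dots> = cosh (1 - t) / sinh 1 * (F1 c - F1 a)" using int1[OF assms(2)] by simp
  finally show ?thesis .
qed

lemma int_right:
  assumes "t \<le> a" "a \<le> c"
  shows "integral {a..c} (\<lambda>s. kern t s * sin (3/2 * pi * s)) = cosh t / sinh 1 * (F2 c - F2 a)"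
proof -
  have "integral {a..c} (\<lambda>s. kern t s * sin (3/2 * pi * s))
      = integral {a..c} (\<lambda>s. cosh t / sinh 1 * (cosh (1 - s) * sin (bb * s)))"
    using assms by (intro integral_cong) (auto simp: kern_def bb_def mult.commute)
  also have "\<dots> = cosh t / sinh 1 * (F2 c - F2 a)" using int2[OF assms(2)] by simp
  finally show ?thesis .
qed

lemma split_int:
  fixes a c t t' :: real
  assumes "a \<le> t" "t \<le> c"
  shows "integral {a..c} (\<lambda>s. kern t' s * sin (3/2 * pi * s))
    = integral {a..t} (\<lambda>s. kern t' s * sin (3/2 * pi * s)) + integral {t..c} (\<lambda>s. kern t' s * sin (3/2 * pi * s))"
  by (rule Henstock_Kurzweil_Integration.integral_combine[symmetric, OF assms])
     (intro integrable_continuous_interval kint_cont)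

lemma sinh_split: "sinh 1 = sinh t * cosh (1 - t) + cosh t * sinh (1 - t)" for t :: real
  using sinh_add[of t "1 - t"] by simp

lemma F1_0: "F1 0 = - bb / (1 + bb^2)" unfolding F1_def by simp
lemma F2_23: "F2 (2/3) = bb * cosh (1/3) / (1 + bb^2)"
proof -
  have "F2 (2/3) = (- sinh (1 - 2/3) * sin (bb * (2/3)) - bb * cosh (1 - 2/3) * cos (bb * (2/3))) / (1 + bb^2)"
    unfolding F2_def ..
  also have "\<dots> = bb * cosh (1/3) / (1 + bb^2)" unfolding sin23 by simp
  finally show ?thesis .
qed
lemma F1_23: "F1 (2/3) = bb * cosh (2/3) / (1 + bb^2)"
proof -
  have "F1 (2/3) = (sinh (2/3) * sin (bb * (2/3)) - bb * cosh (2/3) * cos (bb * (2/3))) / (1 + bb^2)"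
    unfolding F1_def ..
  also have "\<dots> = bb * cosh (2/3) / (1 + bb^2)" unfolding sin23 by simp
  finally show ?thesis .
qed
lemma F2_1: "F2 1 = 0"
proof -
  have "F2 1 = (- sinh (1 - 1) * sin bb - bb * cosh (1 - 1) * cos bb) / (1 + bb^2)"
    unfolding F2_def by simp
  also have "\<dots> = 0" unfolding sin1 by simp
  finally show ?thesis .
qed

lemma PP_low: assumes t: "t \<in> {0..2/3}" shows "PP t = AA t"
proof -
  have "PP t = cosh (1 - t) / sinh 1 * (F1 t - F1 0) + cosh t / sinh 1 * (F2 (2/3) - F2 t)"
    unfolding PP_def using t
    by (subst split_int[of 0 t "2/3"], simp, simp, subst int_left, simp, simp, simp, subst int_right, simp_all)
  also have "\<dots> = AA t"
  proof -
    define S where "S = sinh (1::real)"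
    define D where "D = 1 + bb^2"
    have S: "S \<noteq> 0" using sinh1_pos unfolding S_def by simp
    have D: "D \<noteq> 0" using bb_nz unfolding D_def by simp
    have sp: "S = sinh t * cosh (1 - t) + cosh t * sinh (1 - t)" unfolding S_def by (rule sinh_split)
    have "cosh (1 - t) / S * (F1 t - F1 0) + cosh t / S * (F2 (2/3) - F2 t)
        = (cosh (1 - t) * (sinh t * sin (bb*t) - bb * cosh t * cos (bb*t) + bb)
           + cosh t * (bb * cosh (1/3) + sinh (1 - t) * sin (bb*t) + bb * cosh (1 - t) * cos (bb*t))) / (D * S)"
      unfolding F1_0 F2_23 unfolding F1_def F2_def D_def[symmetric] using S D by (simp add: field_simps)
    also have "\<dots> = (sin (bb*t) * S + bb * (cosh (1 - t) + cosh (1/3) * cosh t)) / (D * S)"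
      unfolding sp by (simp add: algebra_simps)
    also have "\<dots> = AA t" unfolding AA_def qq_def D_def[symmetric] S_def[symmetric] using S D by (simp add: field_simps)
    finally show ?thesis unfolding S_def .
  qed
  finally show ?thesis .
qed

lemma NN_low: assumes t: "t \<in> {0..2/3}" shows "NN t = BB t"
proof -
  have "NN t = cosh t / sinh 1 * (F2 1 - F2 (2/3))"
    unfolding NN_def using t by (subst int_right) auto
  also have "\<dots> = BB t"
  proof -
    define S where "S = sinh (1::real)"
    define D where "D = 1 + bb^2"
    have S: "S \<noteq> 0" using sinh1_pos unfolding S_def by simp
    have D: "D \<noteq> 0" using bb_nz unfolding D_def by simp
    show ?thesis unfolding F2_1 F2_23 BB_def qq_def D_def[symmetric] S_def[symmetric] using S D by (simp add: field_simps)
  qed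
  finally show ?thesis .
qed

lemma PP_high: assumes t: "t \<in> {2/3..1}" shows "PP t = CC t"
proof -
  have "PP t = cosh (1 - t) / sinh 1 * (F1 (2/3) - F1 0)"
    unfolding PP_def using t by (subst int_left) auto
  also have "\<dots> = CC t"
  proof -
    define S where "S = sinh (1::real)"
    define D where "D = 1 + bb^2"
    have S: "S \<noteq> 0" using sinh1_pos unfolding S_def by simp
    have D: "D \<noteq> 0" using bb_nz unfolding D_def by simp
    show ?thesis unfolding F1_0 F1_23 CC_def qq_def D_def[symmetric] S_def[symmetric] using S D by (simp add: field_simps)
  qed
  finally show ?thesis .
qed

lemma NN_high: assumes t: "t \<in> {2/3..1}" shows "NN t = DD t"
proof -
  have "NN t = cosh (1 - t) / sinh 1 * (F1 t - F1 (2/3)) + cosh t / sinh 1 * (F2 1 - F2 t)"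
    unfolding NN_def using t
    by (subst split_int[of "2/3" t 1], simp, simp, subst int_left, simp, simp, simp, subst int_right, simp_all)
  also have "\<dots> = DD t"
  proof -
    define S where "S = sinh (1::real)"
    define D where "D = 1 + bb^2"
    have S: "S \<noteq> 0" using sinh1_pos unfolding S_def by simp
    have D: "D \<noteq> 0" using bb_nz unfolding D_def by simp
    have sp: "S = sinh t * cosh (1 - t) + cosh t * sinh (1 - t)" unfolding S_def by (rule sinh_split)
    have "cosh (1 - t) / S * (F1 t - F1 (2/3)) + cosh t / S * (F2 1 - F2 t)
        = (cosh (1 - t) * (sinh t * sin (bb*t) - bb * cosh t * cos (bb*t) - bb * cosh (2/3))
           + cosh t * (sinh (1 - t) * sin (bb*t) + bb * cosh (1 - t) * cos (bb*t))) / (D * S)"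
      unfolding F1_23 F2_1 unfolding F1_def F2_def D_def[symmetric] using S D by (simp add: field_simps)
    also have "\<dots> = (S * sin (bb*t) - bb * cosh (2/3) * cosh (1 - t)) / (D * S)"
      unfolding sp by (simp add: algebra_simps)
    also have "\<dots> = DD t" unfolding DD_def qq_def D_def[symmetric] S_def[symmetric] using S D by (simp add: field_simps)
    finally show ?thesis unfolding S_def .
  qed
  finally show ?thesis .
qed

lemma qq_pos: "qq > 0" unfolding qq_def using sinh1_pos bb_nz by (simp add: add_pos_nonneg)

lemma BB_neg: "BB t < 0" unfolding BB_def using qq_pos bb_pos by (simp add: mult_pos_pos)
lemma CC_pos: "CC t > 0" unfolding CC_def using qq_pos bb_pos by (simp add: add_pos_pos)
lemma AA0_pos: "AA 0 > 0" unfolding AA_def using qq_pos bb_pos by (simp add: add_pos_pos)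
lemma DD_neg: assumes t: "t \<in> {2/3..1}" shows "DD t < 0"
proof -
  have "sin (bb * t) \<le> 0" using sin_nonpos_23[OF t] by (simp add: bb_def)
  then have "sinh 1 * sin (bb * t) \<le> 0" using sinh1_pos by (simp add: mult_nonneg_nonpos)
  moreover have "bb * cosh (2/3) * cosh (1 - t) > 0" using bb_pos by simp
  ultimately show ?thesis unfolding DD_def using qq_pos by (simp add: mult_pos_neg)
qed

lemma FF_low: "t \<in> {0..2/3} \<Longrightarrow> FF r t = exp (-2*r) * AA t + exp (2*r) * BB t"
  by (simp add: FF_PN PP_low NN_low)
lemma FF_high: "t \<in> {2/3..1} \<Longrightarrow> FF r t = exp (-2*r) * CC t + exp (2*r) * DD t"
  by (simp add: FF_PN PP_high NN_high)

lemma pos_from_ratio: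
  fixes A B r :: real
  assumes B: "B < 0" and q: "exp (4*r) < - A / B"
  shows "exp (-2*r) * A + exp (2*r) * B > 0"
proof -
  have "exp (4*r) * (- B) < (- A / B) * (- B)" using q B by (intro mult_strict_right_mono) auto
  also have "(- A / B) * (- B) = A" using B by simp
  finally have "exp (4*r) * (- B) < A" .
  then have "0 < A + exp (4*r) * B" by simp
  then have "0 < exp (-2*r) * (A + exp (4*r) * B)" by simp
  moreover have "exp (-2*r) * exp (4*r) = exp (2*r)" by (simp add: exp_add[symmetric])
  ultimately show ?thesis by (simp add: algebra_simps)
qed

lemma sup_ratio:
  fixes f g :: "real \<Rightarrow> real" and a b x r :: real
  assumes ab: "a \<le> b" and cf: "continuous_on {a..b} f" and cg: "continuous_on {a..b} g"
    and gneg: "\<And>t. t \<in> {a..b} \<Longrightarrow> g t < 0" and x: "x \<in> {a..b}" and fx: "- f x / g x > 0"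
    and rr: "r < ln (SUP t\<in>{a..b}. - f t / g t) / 4"
  shows "\<exists>t\<in>{a..b}. exp (4*r) < - f t / g t"
proof -
  have c: "continuous_on {a..b} (\<lambda>t. - f t / g t)"
    using gneg by (intro continuous_intros cf cg) fastforce
  obtain tm where "tm \<in> {a..b}" and tm: "\<forall>y\<in>{a..b}. - f y / g y \<le> - f tm / g tm"
    using continuous_attains_sup[OF _ _ c] ab by auto
  then have bdd: "bdd_above ((\<lambda>t. - f t / g t) ` {a..b})" by (intro bdd_aboveI2[of _ _ "- f tm / g tm"]) auto
  have ne: "{a..b} \<noteq> {}" using ab by simp
  define S where "S = (SUP t\<in>{a..b}. - f t / g t)"
  have "- f x / g x \<le> S" unfolding S_def by (rule cSUP_upper[OF x bdd])
  then have Sp: "S > 0" using fx by linarith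
  have "4 * r < ln S" using rr unfolding S_def by simp
  then have "exp (4*r) < S" using Sp by (metis exp_less_cancel_iff exp_ln)
  then show ?thesis unfolding S_def using less_cSUP_iff[OF ne bdd] by blast
qed

lemma exists_t0:
  assumes "\<rho> < rho0"
  shows "\<exists>t0\<in>{0..1}. FF \<rho> t0 > 0"
proof (cases "\<rho> < rho1")
  case True
  have "\<exists>t\<in>{0..2/3}. exp (4*\<rho>) < - AA t / BB t"
  proof (rule sup_ratio[where x=0])
    show "continuous_on {0..2/3} AA" unfolding AA_def[abs_def] by (intro continuous_intros)
    show "continuous_on {0..2/3} BB" unfolding BB_def[abs_def] by (intro continuous_intros)
    show "- AA 0 / BB 0 > 0" using AA0_pos BB_neg[of 0] by (simp add: divide_pos_neg)
    show "\<rho> < ln (SUP t\<in>{0..2/3}. - AA t / BB t) / 4" using True unfolding rho1_def .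
  qed (auto simp: BB_neg)
  then obtain t where t: "t \<in> {0..2/3}" and q: "exp (4*\<rho>) < - AA t / BB t" by blast
  have "FF \<rho> t > 0" using FF_low[OF t] pos_from_ratio[OF BB_neg q] by simp
  then show ?thesis using t by (intro bexI[of _ t]) auto
next
  case False
  then have rr: "\<rho> < rho2" using assms unfolding rho0_def by simp
  have "\<exists>t\<in>{2/3..1}. exp (4*\<rho>) < - CC t / DD t"
  proof (rule sup_ratio[where x=1])
    show "continuous_on {2/3..1} CC" unfolding CC_def[abs_def] by (intro continuous_intros)
    show "continuous_on {2/3..1} DD" unfolding DD_def[abs_def] by (intro continuous_intros)
    show "- CC 1 / DD 1 > 0" using CC_pos[of 1] DD_neg[of 1] by (simp add: divide_pos_neg)
    show "\<rho> < ln (SUP t\<in>{2/3..1}. - CC t / DD t) / 4" using rr unfolding rho2_def .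
  qed (auto simp: DD_neg)
  then obtain t where t: "t \<in> {2/3..1}" and q: "exp (4*\<rho>) < - CC t / DD t" by blast
  have "FF \<rho> t > 0" using FF_high[OF t] pos_from_ratio[OF DD_neg[OF t] q] by simp
  then show ?thesis using t by (intro bexI[of _ t]) auto
qed


theorem mainTheorem2:
  fixes \<rho> :: real
  assumes "0 < \<rho>" and "\<rho> < rho0"
  shows "(\<exists>lp lm :: real. \<exists>up um :: real \<Rightarrow> real.
            lp > 0 \<and> lm < 0 \<and>
            continuous_on {0..1} up \<and> continuous_on {0..1} um \<and>
            supnorm up = \<rho> \<and> supnorm um = \<rho> \<and>
            solves lp up \<and> solves lm um)
       \<and> (\<forall>lam (u :: real \<Rightarrow> real). continuous_on {0..1} u \<and> supnorm u = \<rho> \<and> solves lam u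
            \<longrightarrow> \<bar>lam\<bar> \<le> \<rho> / (SUP t\<in>{0..1}. FF \<rho> t))"
proof -
  obtain t0 where t0: "t0 \<in> {0..1}" "FF \<rho> t0 > 0" using exists_t0[OF assms(2)] by blast
  interpret S: setting \<rho> t0 by unfold_locales (use assms t0 in auto)
  obtain up where up: "up \<in> Dom \<rho>" "supnorm up = \<rho>" "solves (1 * \<rho> / supnorm (Gf up)) up"
    using S.exists_sol[of 1] by auto
  obtain um where um: "um \<in> Dom \<rho>" "supnorm um = \<rho>" "solves (-1 * \<rho> / supnorm (Gf um)) um"
    using S.exists_sol[of "-1"] by auto
  have part1: "\<exists>lp lm :: real. \<exists>up um :: real \<Rightarrow> real.
            lp > 0 \<and> lm < 0 \<and>
            continuous_on {0..1} up \<and> continuous_on {0..1} um \<and>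
            supnorm up = \<rho> \<and> supnorm um = \<rho> \<and>
            solves lp up \<and> solves lm um"
  proof (intro exI conjI)
    show "1 * \<rho> / supnorm (Gf up) > 0" using S.Npos'[OF up(1)] assms(1) by simp
    show "-1 * \<rho> / supnorm (Gf um) < 0" using S.Npos'[OF um(1)] assms(1) by (simp add: divide_neg_pos)
  qed (use up um Dom_cont in auto)
  have part2: "\<bar>lam\<bar> \<le> \<rho> / (SUP t\<in>{0..1}. FF \<rho> t)"
    if u: "continuous_on {0..1} u" "supnorm u = \<rho>" "solves lam u" for lam u
  proof -
    have uD: "u \<in> Dom \<rho>" unfolding Dom_def using u(1) supnorm_ge[OF u(1)] u(2) by auto
    have ueq: "\<And>t. t \<in> {0..1} \<Longrightarrow> u t = lam * Gf u t" using u(3) unfolding solves_Gf by auto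
    have FG: "\<And>t. t \<in> {0..1} \<Longrightarrow> FF \<rho> t \<le> Gf u t" by (rule Gf_ge_FF[OF uD])
    have bdd: "bdd_above ((\<lambda>t. FF \<rho> t) ` {0..1})"
    proof (rule bdd_aboveI2)
      fix t :: real assume t: "t \<in> {0..1}"
      show "FF \<rho> t \<le> cosh 1 * cosh 1 / sinh 1 * exp (2*\<rho>)"
        using FG[OF t] Gf_bound[OF uD t] by linarith
    qed
    define Sf where "Sf = (SUP t\<in>{0..1}. FF \<rho> t)"
    have "FF \<rho> t0 \<le> Sf" unfolding Sf_def by (rule cSUP_upper[OF t0(1) bdd])
    then have Sf: "Sf > 0" using t0 by linarith
    have key: "\<bar>lam\<bar> * FF \<rho> t \<le> \<rho>" if t: "t \<in> {0..1}" for t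
    proof (cases "lam \<ge> 0")
      case True
      then have "\<bar>lam\<bar> * FF \<rho> t \<le> lam * Gf u t" using FG[OF t] by (simp add: mult_left_mono)
      also have "\<dots> = u t" using ueq[OF t] by simp
      also have "\<dots> \<le> \<rho>" using Dom_bd[OF uD t] by simp
      finally show ?thesis .
    next
      case False
      then have "\<bar>lam\<bar> * FF \<rho> t \<le> (- lam) * Gf u t" using FG[OF t] by (simp add: mult_left_mono)
      also have "\<dots> = - u t" using ueq[OF t] by simp
      also have "\<dots> \<le> \<rho>" using Dom_bd[OF uD t] by simp
      finally show ?thesis .
    qed
    show ?thesis
    proof (cases "lam = 0")
      case True then show ?thesis using Sf assms(1) unfolding Sf_def by simp
    next
      case False
      then have la: "\<bar>lam\<bar> > 0" by simp
      have "Sf \<le> \<rho> / \<bar>lam\<bar>"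
        unfolding Sf_def
      proof (rule cSUP_least)
        fix t :: real assume "t \<in> {0..1}"
        then show "FF \<rho> t \<le> \<rho> / \<bar>lam\<bar>" using key la by (simp add: pos_le_divide_eq mult.commute)
      qed simp
      then have "\<bar>lam\<bar> * Sf \<le> \<rho>" using la by (simp add: pos_le_divide_eq mult.commute)
      then show ?thesis unfolding Sf_def[symmetric] using Sf by (simp add: pos_le_divide_eq)
    qed
  qed
  show ?thesis using part1 part2 by blast
qed


end
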